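(* Assume that $X_0\in L^\infty$. Then for every $\beta\in\mathbb{R}$ and $\lambda>0$, we have $\widehat H^\prime_{\beta,\lambda}(1-)>-\infty$. Let $$G^*_{\beta,\lambda}(s)=\left(-\widehat H_{\beta,\lambda}^\prime(s)\right)^+,\quad s\in[0,1).$$ Then $G^*_{\beta,\lambda}$ is bounded and uniquely solves both problems $$\max_{G\in\mathscr{Q},\,G\ge0}\ \int_0^1-\tfrac12 G(s)^2ds-\int_0^1G(s)\,dH_{\beta,\lambda}(s)$$ and $$\max_{G\in\mathscr{Q},\,G\ge0}\ \int_0^1-\tfrac12 G(s)^2ds-\int_0^1G(s)\,d\widehat H_{\beta,\lambda}(s).$$ Moreover, these two problems have the same optimal value.
   Context: Setting: complete nonatomic probability space; $\rho\in L^2$ is the stochastic discount factor with $\rho>0$ a.s. and $\mathrm{Var}[\rho]>0$; $Q_X$ denotes the (upper, right-continuous) quantile function of $X$ and $Q_0=Q_{X_0}$ for a benchmark $X_0$; $\mathscr{Q}$ is the set of increasing, right-continuous functions $Q:[0,1)\to\mathbb{R}$ with $\int_0^1Q^2(s)ds<\infty$. For $\beta\in\mathbb{R}$, $\lambda>0$, define $H_{\beta,\lambda}(s)=\int_0^s(2\beta-\lambda Q_\rho(1-t)-2Q_0(t))dt$, $s\in[0,1]$, and let $\widehat H_{\beta,\lambda}$ denote the concave envelope of $H_{\beta,\lambda}$ on $[0,1]$ (the smallest concave function on $[0,1]$ dominating $H_{\beta,\lambda}$). Primes denote right derivatives. *)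

theory Defs
  imports "HOL-Probability.Probability"
begin

definition nonatomic :: "'a measure \<Rightarrow> bool" where
  "nonatomic M \<longleftrightarrow> (\<forall>A\<in>sets M. measure M A > 0 \<longrightarrow>
      (\<exists>B\<in>sets M. B \<subseteq> A \<and> 0 < measure M B \<and> measure M B < measure M A))"

definition quantile :: "'a measure \<Rightarrow> ('a \<Rightarrow> real) \<Rightarrow> real \<Rightarrow> real" where
  "quantile M X s = Inf {x::real. measure M {\<omega>\<in>space M. X \<omega> \<le> x} > s}"

definition hdens :: "'a measure \<Rightarrow> ('a \<Rightarrow> real) \<Rightarrow> ('a \<Rightarrow> real) \<Rightarrow> real \<Rightarrow> real \<Rightarrow> real \<Rightarrow> real" where
  "hdens M \<rho> X0 \<beta> lam t = 2 * \<beta> - lam * quantile M \<rho> (1 - t) - 2 * quantile M X0 t"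

definition Hfun :: "'a measure \<Rightarrow> ('a \<Rightarrow> real) \<Rightarrow> ('a \<Rightarrow> real) \<Rightarrow> real \<Rightarrow> real \<Rightarrow> real \<Rightarrow> real" where
  "Hfun M \<rho> X0 \<beta> lam s = (LINT t:{0..s}|lborel. hdens M \<rho> X0 \<beta> lam t)"

definition concave_envelope :: "(real \<Rightarrow> real) \<Rightarrow> real \<Rightarrow> real" where
  "concave_envelope H s =
     Inf {f s | f. concave_on {0..1} f \<and> (\<forall>x\<in>{0..1}. H x \<le> f x)}"

definition rderiv :: "(real \<Rightarrow> real) \<Rightarrow> real \<Rightarrow> real" where
  "rderiv f x = Lim (at_right 0) (\<lambda>h. (f (x + h) - f x) / h)"

definition Qclass :: "(real \<Rightarrow> real) set" where
  "Qclass = {Q. mono_on {0..<1} Q \<and> (\<forall>s\<in>{0..<1}. continuous (at_right s) Q)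
               \<and> set_integrable lborel {0..<1} (\<lambda>s. (Q s)^2)}"

text \<open>Objective  int_0^1 -G^2/2 ds - int_0^1 G dF, where F is absolutely continuous with
  density dens, so that int G dF = int G(s) dens(s) ds.\<close>
definition objective :: "(real \<Rightarrow> real) \<Rightarrow> (real \<Rightarrow> real) \<Rightarrow> real" where
  "objective dens G = (LINT s:{0..<1}|lborel. - (1/2) * (G s)^2)
                      - (LINT s:{0..<1}|lborel. G s * dens s)"

end

theory Submission
  imports Defs
begin

lemma concave_slope:
  fixes g :: "real \<Rightarrow> real"
  assumes "concave_on I g" "x \<in> I" "y \<in> I" "x < t" "t < y"
  shows "(g y - g x) / (y - x) \<le> (g t - g x) / (t - x)"
    and "(g y - g t) / (y - t) \<le> (g y - g x) / (y - x)"
proof -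
  have c: "convex_on I (\<lambda>x. - g x)" using assms(1) by (simp add: concave_on_def)
  note s = convex_on_slope_le[OF c assms(2,3,4,5)]
  have e: "(- g a - - g b) / (a - b) = - ((g b - g a) / (b - a))" for a b
    by (metis minus_diff_eq minus_divide_right minus_diff_minus)
  show "(g y - g x) / (y - x) \<le> (g t - g x) / (t - x)"
    using s(1) e[of x t] e[of x y] by simp
  show "(g y - g t) / (y - t) \<le> (g y - g x) / (y - x)"
    using s(2) e[of x y] e[of t y] by simp
qed

lemma concave_on_min:
  fixes S :: "real set" and f g :: "real \<Rightarrow> real"
  assumes "concave_on S f" "concave_on S g"
  shows "concave_on S (\<lambda>x. min (f x) (g x))"
  unfolding concave_on_iff
proof (intro conjI ballI allI impI)
  show "convex S" using assms(1) by (rule concave_on_imp_convex)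
  fix x y u v :: real assume xy: "x \<in> S" "y \<in> S" and uv: "0 \<le> u" "0 \<le> v" "u + v = 1"
  have "u * min (f x) (g x) + v * min (f y) (g y) \<le> u * f x + v * f y"
    using uv by (intro add_mono mult_left_mono) auto
  also have "\<dots> \<le> f (u *\<^sub>R x + v *\<^sub>R y)" using assms(1) xy uv by (auto simp: concave_on_iff)
  finally have 1: "u * min (f x) (g x) + v * min (f y) (g y) \<le> f (u *\<^sub>R x + v *\<^sub>R y)" .
  have "u * min (f x) (g x) + v * min (f y) (g y) \<le> u * g x + v * g y"
    using uv by (intro add_mono mult_left_mono) auto
  also have "\<dots> \<le> g (u *\<^sub>R x + v *\<^sub>R y)" using assms(2) xy uv by (auto simp: concave_on_iff)
  finally have 2: "u * min (f x) (g x) + v * min (f y) (g y) \<le> g (u *\<^sub>R x + v *\<^sub>R y)" .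
  show "u * min (f x) (g x) + v * min (f y) (g y) \<le> min (f (u *\<^sub>R x + v *\<^sub>R y)) (g (u *\<^sub>R x + v *\<^sub>R y))"
    using 1 2 by simp
qed

lemma telescope_const:
  fixes \<Psi> d :: "real \<Rightarrow> real"
  assumes ab: "a \<le> b"
    and bnd: "\<And>x y. a \<le> x \<Longrightarrow> x \<le> y \<Longrightarrow> y \<le> b \<Longrightarrow> \<bar>\<Psi> y - \<Psi> x\<bar> \<le> (d x - d y) * (y - x)"
  shows "\<Psi> b = \<Psi> a"
proof -
  define C where "C = (d a - d b) * (b - a)"
  have n_bnd: "\<bar>\<Psi> b - \<Psi> a\<bar> \<le> C / real n" if n: "n > 0" for n :: nat
  proof -
    define h where "h = (b - a) / real n"
    define x where "x i = a + real i * h" for i :: nat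
    have h0: "0 \<le> h" using ab n by (simp add: h_def)
    have x0: "x 0 = a" and xn: "x n = b" using n by (auto simp: x_def h_def)
    have xa: "a \<le> x i" for i using h0 by (simp add: x_def)
    have xb: "x i \<le> b" if "i \<le> n" for i
    proof -
      have "real i * h \<le> real n * h" using that h0 by (intro mult_right_mono) auto
      then show ?thesis using n by (simp add: x_def h_def)
    qed
    have xs: "x i \<le> x (Suc i)" for i using h0 by (simp add: x_def algebra_simps)
    have "\<Psi> b - \<Psi> a = (\<Sum>i<n. \<Psi> (x (Suc i)) - \<Psi> (x i))"
      by (simp add: sum_lessThan_telescope[of "\<lambda>i. \<Psi> (x i)"] x0 xn)
    then have "\<bar>\<Psi> b - \<Psi> a\<bar> \<le> (\<Sum>i<n. \<bar>\<Psi> (x (Suc i)) - \<Psi> (x i)\<bar>)"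
      by (simp add: sum_abs)
    also have "\<dots> \<le> (\<Sum>i<n. (d (x i) - d (x (Suc i))) * h)"
    proof (rule sum_mono)
      fix i assume "i \<in> {..<n}"
      then have "Suc i \<le> n" by simp
      then show "\<bar>\<Psi> (x (Suc i)) - \<Psi> (x i)\<bar> \<le> (d (x i) - d (x (Suc i))) * h"
        using bnd[OF xa xs xb] by (simp add: x_def algebra_simps)
    qed
    also have "\<dots> = (\<Sum>i<n. d (x i) - d (x (Suc i))) * h"
      by (simp add: sum_distrib_right)
    also have "\<dots> = (d a - d b) * h"
      by (simp add: sum_lessThan_telescope'[of "\<lambda>i. d (x i)"] x0 xn)
    also have "\<dots> = C / real n" by (simp add: C_def h_def)
    finally show ?thesis .
  qed
  show ?thesis
  proof (rule ccontr)
    assume "\<Psi> b \<noteq> \<Psi> a"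
    then have X: "0 < \<bar>\<Psi> b - \<Psi> a\<bar>" by simp
    obtain n :: nat where n: "C / \<bar>\<Psi> b - \<Psi> a\<bar> < real n"
      using reals_Archimedean2 by blast
    have "n > 0"
    proof (rule ccontr)
      assume "\<not> n > 0"
      then have "n = 0" by simp
      then have "C < 0" using n X by (simp add: divide_less_0_iff)
      then show False using n_bnd[of 1] by simp
    qed
    then have "C < real n * \<bar>\<Psi> b - \<Psi> a\<bar>" using n X by (simp add: divide_less_eq mult.commute)
    then have "C / real n < \<bar>\<Psi> b - \<Psi> a\<bar>" using \<open>n > 0\<close> by (simp add: divide_less_eq mult.commute)
    then show False using n_bnd[OF \<open>n > 0\<close>] by simp
  qed
qed

lemma emeasure_Ioc_fin: "emeasure lborel {x<..y::real} < top"
proof (cases "x \<le> y")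
  case True then show ?thesis by (simp add: emeasure_lborel_Ioc)
next
  case False then have "{x<..y} = {}" by auto
  then show ?thesis by simp
qed

lemma set_integral_empty: "(LINT t:{}|lborel. f t) = (0::real)"
  by (simp add: set_lebesgue_integral_def)

lemma bdd_set_integrable:
  fixes f :: "real \<Rightarrow> real"
  assumes "f \<in> borel_measurable borel" "\<And>x. \<bar>f x\<bar> \<le> B" "A \<in> sets borel" "emeasure lborel A < \<infinity>"
  shows "set_integrable lborel A f"
  unfolding set_integrable_def
  by (rule integrableI_bounded_set_indicator[where B=B]) (use assms in auto)

locale env =
  fixes H :: "real \<Rightarrow> real" and K K2 :: real
  assumes Hcont: "continuous_on {0..1} H"
  and H0: "H 0 = 0"
  and K_nn: "0 \<le> K" and K2_nn: "0 \<le> K2"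
  and HK: "\<And>x. x \<in> {0..1} \<Longrightarrow> H x \<le> K * x"
  and HK2: "\<And>x. x \<in> {0..1} \<Longrightarrow> H x \<le> H 1 + K2 * (1 - x)"
begin

definition adm :: "(real \<Rightarrow> real) \<Rightarrow> bool" where
  "adm f \<longleftrightarrow> concave_on {0..1} f \<and> (\<forall>x\<in>{0..1}. H x \<le> f x)"

abbreviation "Hh \<equiv> concave_envelope H"

lemma Hh_def': "Hh s = Inf {f s | f. adm f}"
  unfolding concave_envelope_def adm_def by simp

lemma adm_const: "adm (\<lambda>_. K)"
proof -
  have "H x \<le> K" if "x \<in> {0..1}" for x
    using HK[OF that] K_nn that by (smt (verit, best) atLeastAtMost_iff mult_left_le)
  then show ?thesis unfolding adm_def by (simp add: concave_on_const)
qed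

lemma adm_ne: "{f s | f. adm f} \<noteq> {}"
  using adm_const by blast

lemma adm_bdd: "s \<in> {0..1} \<Longrightarrow> bdd_below {f s | f. adm f}"
  unfolding adm_def bdd_below_def by blast

lemma Hh_ge: "s \<in> {0..1} \<Longrightarrow> H s \<le> Hh s"
  unfolding Hh_def' by (rule cInf_greatest[OF adm_ne]) (auto simp: adm_def)

lemma Hh_le: "adm f \<Longrightarrow> s \<in> {0..1} \<Longrightarrow> Hh s \<le> f s"
  unfolding Hh_def' by (rule cInf_lower) (auto intro: adm_bdd)

lemma Hh_concave: "concave_on {0..1} Hh"
proof (rule concave_on_linorderI)
  show "convex {0..1::real}" by simp
  fix t x y :: real assume t: "0 < t" "t < 1" and xy: "x \<in> {0..1}" "y \<in> {0..1}" "x < y"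
  have z: "(1 - t) *\<^sub>R x + t *\<^sub>R y \<in> {0..1}"
  proof -
    have "(1 - t) * x + t * y \<le> (1 - t) * 1 + t * 1"
      using t xy by (intro add_mono mult_left_mono) auto
    moreover have "0 \<le> (1 - t) * x + t * y" using t xy by simp
    ultimately show ?thesis by simp
  qed
  show "(1 - t) * Hh x + t * Hh y \<le> Hh ((1 - t) *\<^sub>R x + t *\<^sub>R y)"
    unfolding Hh_def'[of "(1 - t) *\<^sub>R x + t *\<^sub>R y"]
  proof (rule cInf_greatest[OF adm_ne], clarify)
    fix f assume f: "adm f"
    have "(1 - t) * Hh x + t * Hh y \<le> (1 - t) * f x + t * f y"
      using Hh_le[OF f xy(1)] Hh_le[OF f xy(2)] t
      by (intro add_mono mult_left_mono) auto
    also have "\<dots> \<le> f ((1 - t) *\<^sub>R x + t *\<^sub>R y)"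
      using f t xy unfolding adm_def by (intro concave_onD) auto
    finally show "(1 - t) * Hh x + t * Hh y \<le> f ((1 - t) *\<^sub>R x + t *\<^sub>R y)" .
  qed
qed

lemma concave_affine: "concave_on S (\<lambda>x::real. a + b * x)"
  if "convex S"
  by (rule concave_on_linorderI) (auto simp: algebra_simps that)

lemma adm_lin1: "adm (\<lambda>x. K * x)"
  unfolding adm_def using HK concave_affine[of "{0..1}" 0 K] by simp

lemma adm_lin2: "adm (\<lambda>x. H 1 + K2 * (1 - x))"
  unfolding adm_def using HK2 concave_affine[of "{0..1}" "H 1 + K2" "-K2"]
  by (simp add: algebra_simps)

lemma Hh_le1: "x \<in> {0..1} \<Longrightarrow> Hh x \<le> K * x"
  using Hh_le[OF adm_lin1] by simp

lemma Hh_le2: "x \<in> {0..1} \<Longrightarrow> Hh x \<le> H 1 + K2 * (1 - x)"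
  using Hh_le[OF adm_lin2] by simp

lemma Hh0: "Hh 0 = 0"
  using Hh_le1[of 0] Hh_ge[of 0] H0 by simp

lemma Hh1: "Hh 1 = H 1"
  using Hh_le2[of 1] Hh_ge[of 1] by simp


lemma slope_le_K:
  assumes "0 \<le> x" "x < y" "y \<le> 1"
  shows "(Hh y - Hh x) / (y - x) \<le> K"
proof (cases "x = 0")
  case True
  then show ?thesis using Hh_le1[of y] Hh0 assms by (simp add: divide_le_eq mult.commute)
next
  case False
  have "(Hh y - Hh x) / (y - x) \<le> (Hh y - Hh 0) / (y - 0)"
    using concave_slope(2)[OF Hh_concave, of 0 y x] assms False by auto
  also have "\<dots> \<le> K" using Hh_le1[of y] Hh0 assms by (simp add: divide_le_eq mult.commute)
  finally show ?thesis .
qed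

lemma slope_ge_K2:
  assumes "0 \<le> x" "x < y" "y \<le> 1"
  shows "- K2 \<le> (Hh y - Hh x) / (y - x)"
proof -
  have a: "- K2 \<le> (Hh 1 - Hh z) / (1 - z)" if "0 \<le> z" "z < 1" for z
    using Hh_le2[of z] Hh1 that by (simp add: le_divide_eq algebra_simps)
  show ?thesis
  proof (cases "y = 1")
    case True then show ?thesis using a assms by simp
  next
    case False
    have "(Hh 1 - Hh x) / (1 - x) \<le> (Hh y - Hh x) / (y - x)"
      using concave_slope(1)[OF Hh_concave, of x 1 y] assms False by auto
    then show ?thesis using a[of x] assms by linarith
  qed
qed

definition M where "M = K + K2"

lemma M_nn: "0 \<le> M" using K_nn K2_nn by (simp add: M_def)

lemma Hh_lip:
  assumes "x \<in> {0..1}" "y \<in> {0..1}"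
  shows "\<bar>Hh y - Hh x\<bar> \<le> M * \<bar>y - x\<bar>"
proof -
  have *: "\<bar>Hh b - Hh a\<bar> \<le> M * (b - a)" if "0 \<le> a" "a < b" "b \<le> 1" for a b
  proof -
    have "\<bar>(Hh b - Hh a) / (b - a)\<bar> \<le> M"
      using slope_le_K[OF that] slope_ge_K2[OF that] K_nn K2_nn unfolding M_def by linarith
    then show ?thesis using that by (simp add: abs_divide divide_le_eq mult.commute)
  qed
  show ?thesis
  proof (cases x y rule: linorder_cases)
    case less then show ?thesis using *[of x y] assms by auto
  next
    case equal then show ?thesis by simp
  next
    case greater then show ?thesis using *[of y x] assms by (auto simp: abs_minus_commute)
  qed
qed

lemma Hh_cont: "continuous_on {0..1} Hh"
proof (rule continuous_onI)
  fix x e :: real assume x: "x \<in> {0..1}" and e: "0 < e"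
  show "\<exists>d>0. \<forall>x'\<in>{0..1}. dist x' x < d \<longrightarrow> dist (Hh x') (Hh x) \<le> e"
  proof (intro exI[of _ "e / (M + 1)"] conjI ballI impI)
    show "0 < e / (M + 1)" using e M_nn by simp
    fix y assume y: "y \<in> {0..1}" and d: "dist y x < e / (M + 1)"
    have "\<bar>Hh y - Hh x\<bar> \<le> M * \<bar>y - x\<bar>" using Hh_lip[OF x y] .
    also have "\<dots> \<le> (M + 1) * \<bar>y - x\<bar>" using abs_ge_zero[of "y - x"] by (simp add: algebra_simps)
    also have "\<dots> \<le> e" using d M_nn by (simp add: dist_real_def field_simps)
    finally show "dist (Hh y) (Hh x) \<le> e" by (simp add: dist_real_def)
  qed
qed

lemma Hh_tendsto_right:
  assumes "0 \<le> s" "s < 1"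
  shows "(Hh \<longlongrightarrow> Hh s) (at_right s)"
proof -
  have "(Hh \<longlongrightarrow> Hh s) (at s within {0..1})"
    using Hh_cont assms by (simp add: continuous_on_def)
  then have "(Hh \<longlongrightarrow> Hh s) (at s within {s<..<1})"
    by (rule tendsto_within_subset) (use assms in auto)
  moreover have "at s within {s<..} = at s within {s<..<1}"
    by (rule at_within_nhd[of _ "{..<1}"]) (use assms in auto)
  ultimately show ?thesis by simp
qed

definition q :: "real \<Rightarrow> real \<Rightarrow> real" where
  "q s \<delta> = (Hh (s + \<delta>) - Hh s) / \<delta>"

definition dd :: "real \<Rightarrow> real" where
  "dd s = Sup (q s ` {0<..1-s})"

lemma q_mono:
  assumes "0 \<le> s" "0 < a" "a \<le> b" "b \<le> 1 - s"
  shows "q s b \<le> q s a"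
proof (cases "a = b")
  case True then show ?thesis by simp
next
  case False
  then show ?thesis unfolding q_def
    using concave_slope(1)[OF Hh_concave, of s "s + b" "s + a"] assms by auto
qed

lemma q_le_K: "0 \<le> s \<Longrightarrow> 0 < \<delta> \<Longrightarrow> \<delta> \<le> 1 - s \<Longrightarrow> q s \<delta> \<le> K"
  unfolding q_def using slope_le_K[of s "s + \<delta>"] by auto

lemma q_bdd: "0 \<le> s \<Longrightarrow> bdd_above (q s ` {0<..1-s})"
  unfolding bdd_above_def by (intro exI[of _ K]) (auto intro: q_le_K)

lemma dd_upper: "0 \<le> s \<Longrightarrow> 0 < \<delta> \<Longrightarrow> \<delta> \<le> 1 - s \<Longrightarrow> q s \<delta> \<le> dd s"
  unfolding dd_def by (rule cSup_upper) (auto intro: q_bdd)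

lemma dd_le_K: "0 \<le> s \<Longrightarrow> s < 1 \<Longrightarrow> dd s \<le> K"
  unfolding dd_def by (rule cSup_least) (auto intro: q_le_K)

lemma dd_ge_K2: "0 \<le> s \<Longrightarrow> s < 1 \<Longrightarrow> - K2 \<le> dd s"
  using dd_upper[of s "1 - s"] slope_ge_K2[of s 1] unfolding q_def by auto

lemma dd_tendsto:
  assumes "0 \<le> s" "s < 1"
  shows "(q s \<longlongrightarrow> dd s) (at_right 0)"
proof (rule increasing_tendsto)
  show "\<forall>\<^sub>F n in at_right 0. q s n \<le> dd s"
    using eventually_at_right_real[of 0 "1 - s"] assms
    by (auto elim!: eventually_mono intro: dd_upper)
  fix a assume a: "a < dd s"
  then obtain \<delta>0 where d0: "\<delta>0 \<in> {0<..1-s}" "a < q s \<delta>0"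
    using less_cSup_iff[of "q s ` {0<..1-s}" a] q_bdd[of s] assms unfolding dd_def by auto
  have d0p: "0 < \<delta>0" using d0 by simp
  show "\<forall>\<^sub>F n in at_right 0. a < q s n"
    using eventually_at_right_real[OF d0p]
  proof eventually_elim
    case (elim n)
    then show ?case using q_mono[of s n \<delta>0] assms d0 by auto
  qed
qed

lemma rderiv_eq: "0 \<le> s \<Longrightarrow> s < 1 \<Longrightarrow> rderiv Hh s = dd s"
  unfolding rderiv_def using dd_tendsto[of s] unfolding q_def
  by (intro tendsto_Lim) auto

lemma rderiv_tendsto: "0 \<le> s \<Longrightarrow> s < 1 \<Longrightarrow>
   ((\<lambda>h. (Hh (s + h) - Hh s) / h) \<longlongrightarrow> rderiv Hh s) (at_right 0)"
  using dd_tendsto[of s] rderiv_eq[of s] unfolding q_def by simp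

lemma dd_le_slope_left:
  assumes "0 \<le> x" "x < s" "s < 1"
  shows "dd s \<le> (Hh s - Hh x) / (s - x)"
  unfolding dd_def
proof (rule cSup_least)
  show "q s ` {0<..1 - s} \<noteq> {}" using assms by auto
  fix v assume "v \<in> q s ` {0<..1 - s}"
  then obtain \<delta> where d: "\<delta> \<in> {0<..1-s}" "v = q s \<delta>" by auto
  have "(Hh (s + \<delta>) - Hh s) / (s + \<delta> - s) \<le> (Hh (s + \<delta>) - Hh x) / (s + \<delta> - x)"
    using concave_slope(2)[OF Hh_concave, of x "s + \<delta>" s] d assms by auto
  also have "\<dots> \<le> (Hh s - Hh x) / (s - x)"
    using concave_slope(1)[OF Hh_concave, of x "s + \<delta>" s] d assms by auto
  finally show "v \<le> (Hh s - Hh x) / (s - x)" using d by (simp add: q_def)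
qed

lemma dd_ge_slope_right:
  assumes "0 \<le> s" "s < y" "y \<le> 1"
  shows "(Hh y - Hh s) / (y - s) \<le> dd s"
  using dd_upper[of s "y - s"] assms unfolding q_def by auto

lemma dd_antimono:
  assumes "0 \<le> x" "x \<le> y" "y < 1"
  shows "dd y \<le> dd x"
proof (cases "x = y")
  case True then show ?thesis by simp
next
  case False
  then show ?thesis using dd_le_slope_left[of x y] dd_ge_slope_right[of x y] assms by auto
qed

lemma dd_rcont:
  assumes "0 \<le> s" "s < 1"
  shows "(dd \<longlongrightarrow> dd s) (at_right s)"
proof (rule order_tendstoI)
  fix a assume "dd s < a"
  then show "\<forall>\<^sub>F x in at_right s. dd x < a"
    using eventually_at_right_real[of s 1] assms
    by (auto elim!: eventually_mono) (metis dd_antimono less_imp_le order_le_less_trans)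
next
  fix a assume a: "a < dd s"
  then obtain \<delta>0 where d0: "\<delta>0 \<in> {0<..1-s}" "a < q s \<delta>0"
    using less_cSup_iff[of "q s ` {0<..1-s}" a] q_bdd[of s] assms unfolding dd_def by auto
  define y where "y = s + \<delta>0"
  have y: "s < y" "y \<le> 1" using d0 by (auto simp: y_def)
  have "((\<lambda>t. (Hh y - Hh t) / (y - t)) \<longlongrightarrow> (Hh y - Hh s) / (y - s)) (at_right s)"
    using y by (intro tendsto_intros Hh_tendsto_right assms) auto
  moreover have "(Hh y - Hh s) / (y - s) = q s \<delta>0" by (simp add: q_def y_def)
  ultimately have "\<forall>\<^sub>F t in at_right s. a < (Hh y - Hh t) / (y - t)"
    using d0 by (simp add: order_tendsto_iff)
  then show "\<forall>\<^sub>F x in at_right s. a < dd x"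
    using eventually_at_right_real[OF y(1)]
  proof eventually_elim
    case (elim t)
    then show ?case using dd_ge_slope_right[of t y] y assms by auto
  qed
qed

lemma dd_left1: "\<exists>L. (dd \<longlongrightarrow> L) (at_left 1)"
proof
  define L where "L = Inf (dd ` {0..<1})"
  have bdd: "bdd_below (dd ` {0..<1})"
    unfolding bdd_below_def by (intro exI[of _ "- K2"]) (auto intro: dd_ge_K2)
  show "(dd \<longlongrightarrow> L) (at_left 1)"
  proof (rule decreasing_tendsto)
    show "\<forall>\<^sub>F n in at_left 1. L \<le> dd n"
      using eventually_at_left_real[of 0 1]
      by (auto elim!: eventually_mono simp: L_def intro!: cInf_lower bdd)
    fix x assume "L < x"
    then obtain t0 where t0: "t0 \<in> {0..<1}" "dd t0 < x"
      using cInf_less_iff[of "dd ` {0..<1}" x] bdd unfolding L_def by auto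
    show "\<forall>\<^sub>F n in at_left 1. dd n < x"
      using eventually_at_left_real[of t0 1] t0
      by (auto elim!: eventually_mono) (metis dd_antimono less_imp_le order_le_less_trans)
  qed
qed


lemma local_affine:
  assumes a: "0 < a" "a < 1" "H a < Hh a"
  shows "\<exists>\<delta>>0. 0 < a - \<delta> \<and> a + \<delta> < 1 \<and> (\<forall>t\<in>{a-\<delta>..<a+\<delta>}. dd t = dd a)"
proof -
  define e where "e = (Hh a - H a) / 3"
  have e: "0 < e" using a by (simp add: e_def)
  obtain d1 where d1: "d1 > 0" "\<And>x. x \<in> {0..1} \<Longrightarrow> dist x a < d1 \<Longrightarrow> dist (H x) (H a) < e"
    using Hcont a e unfolding continuous_on_iff by (metis atLeastAtMost_iff less_eq_real_def)
  define \<delta> where "\<delta> = min (d1 / 2) (min (a / 2) (min ((1 - a) / 2) (e / (2 * (M + 1)))))"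
  have dpos: "0 < \<delta>" using d1 a e M_nn by (simp add: \<delta>_def)
  have dd1: "\<delta> < d1" using d1 by (simp add: \<delta>_def)
  have da: "\<delta> \<le> a / 2" "\<delta> \<le> (1 - a) / 2" unfolding \<delta>_def by (metis min.cobounded1 min.cobounded2 order_trans)+
  have de: "M * \<delta> < e"
  proof -
    have "\<delta> \<le> e / (2 * (M + 1))" by (simp add: \<delta>_def)
    then have "(M + 1) * \<delta> \<le> e / 2" using M_nn by (simp add: field_simps)
    then show ?thesis using dpos e by (simp add: algebra_simps)
  qed
  define p where "p = a - \<delta>"
  define r where "r = a + \<delta>"
  have pr: "0 < p" "p < a" "a < r" "r < 1" using da dpos a by (auto simp: p_def r_def)
  define c where "c = (Hh r - Hh p) / (r - p)"
  define L where "L x = Hh p + c * (x - p)" for x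
  have Li: "L x \<le> Hh x" if "p \<le> x" "x \<le> r" for x
  proof (cases "x = p \<or> x = r")
    case True then show ?thesis using pr by (auto simp: L_def c_def)
  next
    case False
    then have "c \<le> (Hh x - Hh p) / (x - p)"
      unfolding c_def using concave_slope(1)[OF Hh_concave, of p r x] that pr by auto
    then show ?thesis using that False by (simp add: L_def le_divide_eq algebra_simps)
  qed
  have Lo1: "Hh x \<le> L x" if "0 \<le> x" "x < p" for x
  proof -
    have "(Hh r - Hh x) / (r - x) \<le> (Hh p - Hh x) / (p - x)"
      using concave_slope(1)[OF Hh_concave, of x r p] that pr by auto
    moreover have "c \<le> (Hh r - Hh x) / (r - x)"
      unfolding c_def using concave_slope(2)[OF Hh_concave, of x r p] that pr by auto
    ultimately have "c \<le> (Hh p - Hh x) / (p - x)" by linarith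
    then show ?thesis using that by (simp add: L_def le_divide_eq algebra_simps)
  qed
  have Lo2: "Hh x \<le> L x" if "r < x" "x \<le> 1" for x
  proof -
    have "(Hh x - Hh p) / (x - p) \<le> c"
      unfolding c_def using concave_slope(1)[OF Hh_concave, of p x r] that pr by auto
    then show ?thesis using that pr by (simp add: L_def divide_le_eq algebra_simps)
  qed
  have LH: "H x < L x" if "p \<le> x" "x \<le> r" for x
  proof -
    have x01: "x \<in> {0..1}" using that pr by auto
    have "dist (H x) (H a) < e" using d1(2)[OF x01] that dd1 by (auto simp: dist_real_def p_def r_def)
    then have "H x < H a + e" by (simp add: dist_real_def abs_less_iff)
    then have 1: "H x < Hh a - 2 * e" unfolding e_def by (simp add: field_simps)
    have "\<bar>Hh p - Hh a\<bar> \<le> M * \<bar>p - a\<bar>" using pr by (intro Hh_lip) auto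
    then have 2: "Hh a - e < Hh p" using de dpos by (simp add: p_def)
    have "\<bar>Hh r - Hh a\<bar> \<le> M * \<bar>r - a\<bar>" using pr by (intro Hh_lip) auto
    then have 3: "Hh a - e < Hh r" using de dpos by (simp add: r_def)
    have "min (Hh p) (Hh r) \<le> L x"
    proof (cases "0 \<le> c")
      case True
      then have "0 \<le> c * (x - p)" using that by simp
      then show ?thesis by (simp add: L_def)
    next
      case False
      then have "c * (r - p) \<le> c * (x - p)" using that by (intro mult_left_mono_neg) auto
      moreover have "c * (r - p) = Hh r - Hh p" using pr by (simp add: c_def)
      ultimately show ?thesis by (simp add: L_def)
    qed
    then show ?thesis using 1 2 3 e by linarith
  qed
  have admf: "adm (\<lambda>x. min (Hh x) (L x))"
    unfolding adm_def
  proof (intro conjI ballI)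
    show "concave_on {0..1} (\<lambda>x. min (Hh x) (L x))"
      using concave_on_min[OF Hh_concave concave_affine[of "{0..1}" "Hh p - c * p" c]]
      by (simp add: L_def algebra_simps)
    fix x :: real assume x: "x \<in> {0..1}"
    show "H x \<le> min (Hh x) (L x)"
    proof (cases "p \<le> x \<and> x \<le> r")
      case True then show ?thesis using LH[of x] Hh_ge[OF x] by simp
    next
      case False
      then have "Hh x \<le> L x" using Lo1[of x] Lo2[of x] x by auto
      then show ?thesis using Hh_ge[OF x] by simp
    qed
  qed
  have HhL: "Hh x = L x" if "p \<le> x" "x \<le> r" for x
    using Hh_le[OF admf, of x] Li[OF that] that pr by (simp add: min_def split: if_splits)
  have ddc: "dd t = c" if t: "p \<le> t" "t < r" for t
  proof -
    have t01: "0 \<le> t" "t < 1" using t pr by auto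
    have "\<forall>\<^sub>F \<eta> in at_right 0. c = q t \<eta>"
      using eventually_at_right_real[of 0 "r - t"] t
    proof -
      have rt: "0 < r - t" using t by simp
      show ?thesis using eventually_at_right_real[OF rt]
      proof (rule eventually_mono)
        fix \<eta> assume "\<eta> \<in> {0<..<r - t}"
        then have "Hh (t + \<eta>) = L (t + \<eta>)" "Hh t = L t" using t by (auto intro!: HhL)
        then have "Hh (t + \<eta>) - Hh t = c * \<eta>" by (simp add: L_def algebra_simps)
        then show "c = q t \<eta>" using \<open>\<eta> \<in> _\<close> by (simp add: q_def)
      qed
    qed
    then have "(q t \<longlongrightarrow> c) (at_right 0)"
      by (rule Lim_transform_eventually[OF tendsto_const])
    then show ?thesis using dd_tendsto[OF t01] by (metis tendsto_unique trivial_limit_at_right_real)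
  qed
  show ?thesis
  proof (intro exI[of _ \<delta>] conjI ballI)
    show "0 < \<delta>" "0 < a - \<delta>" "a + \<delta> < 1" using dpos pr by (auto simp: p_def r_def)
    fix t assume "t \<in> {a - \<delta>..<a + \<delta>}"
    then show "dd t = dd a" using ddc[of t] ddc[of a] pr by (auto simp: p_def r_def)
  qed
qed

definition ddz :: "real \<Rightarrow> real" where
  "ddz x = (if x \<in> {0..<1} then dd x else 0)"

lemma ddz_bnd: "\<bar>ddz x\<bar> \<le> M"
  using dd_le_K dd_ge_K2 K_nn K2_nn by (auto simp: ddz_def M_def abs_le_iff)
     (smt (verit, best) dd_ge_K2)+

lemma ddz_meas: "ddz \<in> borel_measurable borel"
proof -
  have "mono_on {0..<1} (\<lambda>x. - dd x)"
    by (rule mono_onI) (auto intro: dd_antimono)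
  then have "(\<lambda>x. - dd x) \<in> borel_measurable (restrict_space borel {0..<1})"
    by (rule borel_measurable_mono_on_fnc)
  then have "(\<lambda>x. if x \<in> {0..<1} then - dd x else 0) \<in> borel_measurable borel"
    by (subst (asm) measurable_restrict_space_iff) auto
  then have "(\<lambda>x. - (if x \<in> {0..<1} then - dd x else 0)) \<in> borel_measurable borel"
    by measurable
  then show ?thesis unfolding ddz_def by (simp add: if_distrib cong: if_cong)
qed

lemma ddz_int: "A \<in> sets borel \<Longrightarrow> emeasure lborel A < \<infinity> \<Longrightarrow> set_integrable lborel A ddz"
  by (rule bdd_set_integrable[OF ddz_meas ddz_bnd])

lemma ddz_int_Ioc: "set_integrable lborel {x<..y} ddz"
  by (rule ddz_int) (auto simp: emeasure_Ioc_fin)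

lemma int_Ioc_split:
  assumes "x \<le> y" "y \<le> z"
  shows "(LINT t:{x<..z}|lborel. ddz t) = (LINT t:{x<..y}|lborel. ddz t) + (LINT t:{y<..z}|lborel. ddz t)"
proof -
  have "{x<..z} = {x<..y} \<union> {y<..z}" using assms by auto
  then show ?thesis by (simp add: set_integral_Un[OF _ ddz_int_Ioc ddz_int_Ioc])
qed

lemma int_Ioc_bounds:
  assumes "0 \<le> x" "x \<le> y" "y < 1"
  shows "dd y * (y - x) \<le> (LINT t:{x<..y}|lborel. ddz t)"
    and "(LINT t:{x<..y}|lborel. ddz t) \<le> dd x * (y - x)"
proof -
  have c: "(LINT t:{x<..y}|lborel. c) = c * (y - x)" for c :: real
    using assms by (simp add: set_integral_const)
  have ci: "set_integrable lborel {x<..y} (\<lambda>_. c)" for c :: real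
    by (rule bdd_set_integrable[where B="\<bar>c\<bar>"]) (auto simp: emeasure_Ioc_fin)
  show "dd y * (y - x) \<le> (LINT t:{x<..y}|lborel. ddz t)"
    unfolding c[symmetric]
    by (rule set_integral_mono[OF ci ddz_int_Ioc]) (use assms in \<open>auto simp: ddz_def intro: dd_antimono\<close>)
  show "(LINT t:{x<..y}|lborel. ddz t) \<le> dd x * (y - x)"
    unfolding c[symmetric]
    by (rule set_integral_mono[OF ddz_int_Ioc ci]) (use assms in \<open>auto simp: ddz_def intro: dd_antimono\<close>)
qed

lemma ftc_lt1:
  assumes "0 \<le> a" "a \<le> b" "b < 1"
  shows "(LINT t:{a<..b}|lborel. ddz t) = Hh b - Hh a"
proof -
  define \<Psi> where "\<Psi> t = Hh t - (LINT s:{a<..t}|lborel. ddz s)" for t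
  have "\<Psi> b = \<Psi> a"
  proof (rule telescope_const[where d=dd, OF assms(2)])
    fix x y assume xy: "a \<le> x" "x \<le> y" "y \<le> b"
    have "\<Psi> y - \<Psi> x = (Hh y - Hh x) - (LINT s:{x<..y}|lborel. ddz s)"
      unfolding \<Psi>_def using int_Ioc_split[of a x y] xy by simp
    moreover have "dd y * (y - x) \<le> Hh y - Hh x" "Hh y - Hh x \<le> dd x * (y - x)"
    proof -
      show "dd y * (y - x) \<le> Hh y - Hh x"
      proof (cases "x = y")
        case False
        then show ?thesis using dd_le_slope_left[of x y] xy assms by (simp add: le_divide_eq)
      qed simp
      show "Hh y - Hh x \<le> dd x * (y - x)"
      proof (cases "x = y")
        case False
        then show ?thesis using dd_ge_slope_right[of x y] xy assms by (simp add: divide_le_eq)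
      qed simp
    qed
    moreover note int_Ioc_bounds[of x y]
    ultimately show "\<bar>\<Psi> y - \<Psi> x\<bar> \<le> (dd x - dd y) * (y - x)"
      using xy assms by (simp add: abs_le_iff algebra_simps)
  qed
  then show ?thesis by (simp add: \<Psi>_def set_integral_empty)
qed

lemma ftc:
  assumes "0 \<le> a" "a \<le> 1"
  shows "(LINT t:{a<..1}|lborel. ddz t) = Hh 1 - Hh a"
proof (cases "a = 1")
  case True then show ?thesis by (simp add: set_integral_empty)
next
  case False
  then have a1: "a < 1" using assms by simp
  define X where "X = (LINT t:{a<..1}|lborel. ddz t) - (Hh 1 - Hh a)"
  have bnd: "\<bar>X\<bar> \<le> 2 * M * (1 - b)" if b: "a \<le> b" "b < 1" for b
  proof -
    have "X = (LINT t:{b<..1}|lborel. ddz t) - (Hh 1 - Hh b)"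
      using int_Ioc_split[of a b 1] ftc_lt1[of a b] b assms by (simp add: X_def)
    moreover have "\<bar>LINT t:{b<..1}|lborel. ddz t\<bar> \<le> M * (1 - b)"
    proof -
      have Mi: "set_integrable lborel {b<..1} (\<lambda>_. M)"
        by (rule bdd_set_integrable[where B="M"]) (auto simp: emeasure_Ioc_fin M_nn)
      have "\<bar>LINT t:{b<..1}|lborel. ddz t\<bar> \<le> (LINT t:{b<..1}|lborel. \<bar>ddz t\<bar>)"
        using set_integral_norm_bound[OF ddz_int_Ioc[of b 1]] by simp
      also have "\<dots> \<le> (LINT t:{b<..1}|lborel. M)"
        by (rule set_integral_mono[OF _ Mi]) (auto intro: ddz_bnd simp: set_integrable_abs ddz_int_Ioc)
      also have "\<dots> = M * (1 - b)" using b by (simp add: set_integral_const)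
      finally show ?thesis .
    qed
    moreover have "\<bar>Hh 1 - Hh b\<bar> \<le> M * \<bar>1 - b\<bar>" using b assms by (intro Hh_lip) auto
    ultimately show ?thesis using b by (simp add: abs_le_iff)
  qed
  have "X = 0"
  proof (rule ccontr)
    assume "X \<noteq> 0"
    then have Xp: "0 < \<bar>X\<bar>" by simp
    define b where "b = max a (1 - \<bar>X\<bar> / (4 * (M + 1)))"
    have b: "a \<le> b" "b < 1" using a1 Xp M_nn by (auto simp: b_def)
    have "1 - b \<le> \<bar>X\<bar> / (4 * (M + 1))" by (simp add: b_def)
    then have "2 * M * (1 - b) \<le> 2 * M * (\<bar>X\<bar> / (4 * (M + 1)))"
      using M_nn by (intro mult_left_mono) auto
    also have "\<dots> < \<bar>X\<bar>"
    proof -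
      have "2 * M * \<bar>X\<bar> < 4 * (M + 1) * \<bar>X\<bar>" using Xp M_nn by (intro mult_strict_right_mono) auto
      then show ?thesis using Xp M_nn by (simp add: field_simps)
    qed
    finally show False using bnd[OF b] by simp
  qed
  then show ?thesis by (simp add: X_def)
qed

end

lemma layer_cake:
  fixes G \<phi> :: "real \<Rightarrow> real"
  assumes Gmono: "mono_on {0..<1} G" and Gnn: "\<And>s. s \<in> {0..<1} \<Longrightarrow> 0 \<le> G s"
    and \<phi>m: "\<phi> \<in> borel_measurable borel"
    and int: "set_integrable lborel {0..<1} (\<lambda>s. G s * \<phi> s)"
  shows "(LINT s:{0..<1}|lborel. G s * \<phi> s) =
         (LINT u:{0..}|lborel. (LINT s:{s\<in>{0..<1}. u < G s}|lborel. \<phi> s))"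
proof -
  define Gz where "Gz s = (if s \<in> {0..<1} then G s else 0)" for s
  define \<phi>z where "\<phi>z s = (if s \<in> {0..<1} then \<phi> s else 0)" for s
  have Gz_nn: "0 \<le> Gz s" for s using Gnn by (simp add: Gz_def)
  have Gzm: "Gz \<in> borel_measurable borel"
  proof -
    have "G \<in> borel_measurable (restrict_space borel {0..<1})"
      by (rule borel_measurable_mono_on_fnc[OF Gmono])
    then show ?thesis unfolding Gz_def by (subst (asm) measurable_restrict_space_iff) auto
  qed
  have \<phi>zm: "\<phi>z \<in> borel_measurable borel" unfolding \<phi>z_def using \<phi>m by measurable
  define f where "f s u = (if 0 \<le> u \<and> u < Gz s then \<phi>z s else 0)" for s u
  have fm: "(\<lambda>(s, u). f s u) \<in> borel_measurable (lborel \<Otimes>\<^sub>M lborel)"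
    unfolding f_def using Gzm \<phi>zm by measurable
  have fm': "(\<lambda>x. f (fst x) (snd x)) \<in> borel_measurable (lborel \<Otimes>\<^sub>M lborel)"
    using fm by (simp add: case_prod_beta')
  have inner: "(LBINT u. f s u) = Gz s * \<phi>z s" for s
  proof -
    have "(LBINT u. f s u) = (LBINT u. indicator {0..<Gz s} u * \<phi>z s)"
      by (rule Bochner_Integration.integral_cong) (auto simp: f_def indicator_def)
    also have "\<dots> = measure lborel {0..<Gz s} * \<phi>z s"
      by simp
    also have "\<dots> = Gz s * \<phi>z s" using Gz_nn[of s] by simp
    finally show ?thesis .
  qed
  have inner_abs: "(LBINT u. \<bar>f s u\<bar>) = Gz s * \<bar>\<phi>z s\<bar>" for s
  proof -
    have "(LBINT u. \<bar>f s u\<bar>) = (LBINT u. indicator {0..<Gz s} u * \<bar>\<phi>z s\<bar>)"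
      by (rule Bochner_Integration.integral_cong) (auto simp: f_def indicator_def)
    also have "\<dots> = Gz s * \<bar>\<phi>z s\<bar>" using Gz_nn[of s] by simp
    finally show ?thesis .
  qed
  have Gphi_int: "integrable lborel (\<lambda>s. Gz s * \<phi>z s)"
  proof -
    have "integrable lborel (\<lambda>s. indicator {0..<1} s *\<^sub>R (G s * \<phi> s))"
      using int by (simp add: set_integrable_def)
    moreover have "(\<lambda>s. indicator {0..<1} s *\<^sub>R (G s * \<phi> s)) = (\<lambda>s. Gz s * \<phi>z s)"
      by (auto simp: Gz_def \<phi>z_def indicator_def fun_eq_iff)
    ultimately show ?thesis by simp
  qed
  have fint: "integrable (lborel \<Otimes>\<^sub>M lborel) (\<lambda>(s, u). f s u)"
  proof -
    have "integrable (lborel \<Otimes>\<^sub>M lborel) (\<lambda>x. f (fst x) (snd x))"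
    proof (rule lborel_pair.Fubini_integrable[OF fm'])
      show "integrable lborel (\<lambda>x. LBINT y. norm (f (fst (x, y)) (snd (x, y))))"
        using integrable_abs[OF Gphi_int] by (simp add: inner_abs abs_mult Gz_nn)
      show "AE x in lborel. integrable lborel (\<lambda>y. f (fst (x, y)) (snd (x, y)))"
      proof (rule AE_I2)
        fix s
        have "integrable lborel (\<lambda>u. indicator {0..<Gz s} u * \<phi>z s)"
        proof -
          have "emeasure lborel {0..<Gz s} < top" using Gz_nn[of s] by simp
          then have "integrable lborel (indicator {0..<Gz s} :: real \<Rightarrow> real)"
            by (intro integrable_real_indicator) auto
          then show ?thesis by (intro integrable_mult_left integrable_mult_right)
        qed
        moreover have "(\<lambda>u. indicator {0..<Gz s} u * \<phi>z s) = (\<lambda>u. f s u)"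
          by (auto simp: f_def indicator_def fun_eq_iff)
        ultimately show "integrable lborel (\<lambda>y. f (fst (s, y)) (snd (s, y)))" by simp
      qed
    qed
    then show ?thesis by (simp add: case_prod_beta')
  qed
  have "(LBINT u. LBINT s. f s u) = (LBINT s. LBINT u. f s u)"
    by (rule lborel_pair.Fubini_integral[OF fint])
  also have "\<dots> = (LBINT s. Gz s * \<phi>z s)" by (simp add: inner)
  also have "\<dots> = (LINT s:{0..<1}|lborel. G s * \<phi> s)"
    unfolding set_lebesgue_integral_def
    by (rule Bochner_Integration.integral_cong) (auto simp: Gz_def \<phi>z_def indicator_def)
  finally have 1: "(LINT s:{0..<1}|lborel. G s * \<phi> s) = (LBINT u. LBINT s. f s u)" by simp
  have 2: "(LBINT s. f s u) = indicator {0..} u *\<^sub>R (LINT s:{s\<in>{0..<1}. u < G s}|lborel. \<phi> s)" for u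
  proof (cases "0 \<le> u")
    case True
    have "(LBINT s. f s u) = (LINT s:{s\<in>{0..<1}. u < G s}|lborel. \<phi> s)"
      unfolding set_lebesgue_integral_def
      by (rule Bochner_Integration.integral_cong) (use True in \<open>auto simp: f_def Gz_def \<phi>z_def indicator_def\<close>)
    then show ?thesis using True by simp
  next
    case False
    then show ?thesis by (simp add: f_def)
  qed
  show ?thesis unfolding 1 2 set_lebesgue_integral_def[of lborel "{0..}"] by simp
qed

lemma layer_cake_nonneg:
  fixes G \<phi> :: "real \<Rightarrow> real"
  assumes "mono_on {0..<1} G" "\<And>s. s \<in> {0..<1} \<Longrightarrow> 0 \<le> G s"
    "\<phi> \<in> borel_measurable borel" "set_integrable lborel {0..<1} (\<lambda>s. G s * \<phi> s)"
    and pos: "\<And>u. 0 \<le> u \<Longrightarrow> 0 \<le> (LINT s:{s\<in>{0..<1}. u < G s}|lborel. \<phi> s)"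
  shows "0 \<le> (LINT s:{0..<1}|lborel. G s * \<phi> s)"
proof -
  have "0 \<le> (LINT u:{0..}|lborel. (LINT s:{s\<in>{0..<1}. u < G s}|lborel. \<phi> s))"
    unfolding set_lebesgue_integral_def[of lborel "{0..}"]
    by (rule integral_nonneg_AE) (use pos in \<open>auto simp: indicator_def\<close>)
  then show ?thesis using layer_cake[OF assms(1-4)] by simp
qed

lemma layer_cake_zero:
  fixes G \<phi> :: "real \<Rightarrow> real"
  assumes "mono_on {0..<1} G" "\<And>s. s \<in> {0..<1} \<Longrightarrow> 0 \<le> G s"
    "\<phi> \<in> borel_measurable borel" "set_integrable lborel {0..<1} (\<lambda>s. G s * \<phi> s)"
    and z: "\<And>u. 0 \<le> u \<Longrightarrow> (LINT s:{s\<in>{0..<1}. u < G s}|lborel. \<phi> s) = 0"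
  shows "(LINT s:{0..<1}|lborel. G s * \<phi> s) = 0"
proof -
  have "(LINT u:{0..}|lborel. (LINT s:{s\<in>{0..<1}. u < G s}|lborel. \<phi> s)) = 0"
  proof -
    have "(\<lambda>u. indicator {0..} u *\<^sub>R (LINT s:{s\<in>{0..<1}. u < G s}|lborel. \<phi> s)) = (\<lambda>_. 0)"
      using z by (intro ext) (auto split: split_indicator)
    then show ?thesis by (simp add: set_lebesgue_integral_def)
  qed
  then show ?thesis using layer_cake[OF assms(1-4)] by simp
qed

lemma a1: "(\<lambda>x::real. x powr (-1/2)) integrable_on {0<..1}"
    by (rule integrable_on_powr_from_0') auto
lemma a2: "(\<lambda>x::real. x powr (-1/2)) absolutely_integrable_on {0<..1}"
    using a1 by (rule nonnegative_absolutely_integrable_1) auto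
lemma a3: "set_integrable lebesgue {0<..1} (\<lambda>x::real. x powr (-1/2))"
    using a2 by (simp add: absolutely_integrable_on_def)
lemma a4: "(\<lambda>x::real. indicator {0<..1} x *\<^sub>R x powr (-1/2)) \<in> borel_measurable lborel"
  by measurable
lemma a5: "set_integrable lborel {0<..1} (\<lambda>x::real. x powr (-1/2))"
  using integrable_completion[OF a4] a3 unfolding set_integrable_def by (rule iffD1)
lemma a6: "set_integrable lborel {0<..<1} (\<lambda>x::real. x powr (-1/2))"
  by (rule set_integrable_subset[OF a5]) auto
lemma a7: "x powr (-1/2) = 1 / sqrt x" if "0 < x" for x :: real
proof -
  have e: "(-1/2::real) = - (1/2)" by linarith
  have "x powr (-1/2) = inverse (x powr (1/2))" unfolding e by (rule powr_minus)
  also have "x powr (1/2) = sqrt x" using that by (rule powr_half_sqrt[OF less_imp_le])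
  finally show ?thesis by (simp only: inverse_eq_divide)
qed
lemma inv_sqrt_int: "set_integrable lborel {0<..<1} (\<lambda>t::real. 1 / sqrt t)"
proof -
  have "set_integrable lborel {0<..<1} (\<lambda>x::real. x powr (-1/2)) = set_integrable lborel {0<..<1} (\<lambda>t. 1 / sqrt t)"
    by (rule set_integrable_cong[OF refl refl a7]) auto
  then show ?thesis using a6 by (rule iffD1)
qed

lemma set_integrable_Icc_of_Ioo:
  fixes f :: "real \<Rightarrow> real"
  assumes fm: "f \<in> borel_measurable borel" and i: "set_integrable lborel {a<..<b} f"
  shows "set_integrable lborel {a..b} f"
proof (cases "a \<le> b")
  case True
  have fin: "set_integrable lborel {a, b} f"
    unfolding set_integrable_def
    by (rule integrableI_bounded_set_indicator[where B="\<bar>f a\<bar> + \<bar>f b\<bar>"])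
       (use fm in \<open>auto simp: emeasure_lborel_countable\<close>)
  have "set_integrable lborel ({a<..<b} \<union> {a, b}) f"
    by (rule set_integrable_Un[OF i fin]) auto
  moreover have "{a<..<b} \<union> {a, b} = {a..b}" using True by auto
  ultimately show ?thesis by simp
next
  case False then show ?thesis by (simp add: set_integrable_def)
qed

lemma mono_set_meas:
  fixes G :: "real \<Rightarrow> real"
  assumes "mono_on {0..<1} G"
  shows "(\<lambda>x. indicator {0..<1} x * G x) \<in> borel_measurable borel"
proof -
  have "G \<in> borel_measurable (restrict_space borel {0..<1})"
    by (rule borel_measurable_mono_on_fnc[OF assms])
  then have "(\<lambda>x. if x \<in> {0..<1} then G x else 0) \<in> borel_measurable borel"
    by (subst (asm) measurable_restrict_space_iff) auto
  moreover have "(\<lambda>x. if x \<in> {0..<1} then G x else 0) = (\<lambda>x. indicator {0..<1} x * G x)"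
    by (auto simp: indicator_def fun_eq_iff)
  ultimately show ?thesis by simp
qed

lemma Qclass_meas: "G \<in> Qclass \<Longrightarrow> set_borel_measurable lborel {0..<1} G"
  unfolding set_borel_measurable_def Qclass_def using mono_set_meas[of G] by simp

lemma abs_le_1_sq: "\<bar>y::real\<bar> \<le> 1 + y * y"
proof (cases "\<bar>y\<bar> \<le> 1")
  case True
  moreover have "0 \<le> y * y" by simp
  ultimately show ?thesis by linarith
next
  case False
  then have "\<bar>y\<bar> * 1 \<le> \<bar>y\<bar> * \<bar>y\<bar>" by (intro mult_left_mono) auto
  then show ?thesis by (simp add: abs_mult_self_eq)
qed

lemma Qclass_int: 
  assumes "G \<in> Qclass"
  shows "set_integrable lborel {0..<1} G"
proof -
  have sq: "set_integrable lborel {0..<1} (\<lambda>s. (G s)^2)" using assms by (simp add: Qclass_def)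
  have one: "set_integrable lborel {0..<1::real} (\<lambda>s. 1::real)"
    using bdd_set_integrable[of "\<lambda>_. 1" 1 "{0..<1}"] by simp
  show ?thesis
    by (rule set_integrable_bound[OF set_integral_add(1)[OF one sq] Qclass_meas[OF assms]])
       (auto simp: power2_eq_square abs_le_1_sq intro!: AE_I2)
qed


lemma set_int_nonneg:
  fixes f :: "'a \<Rightarrow> real"
  shows "(\<And>x. x \<in> A \<Longrightarrow> 0 \<le> f x) \<Longrightarrow> 0 \<le> (LINT x:A|M. f x)"
  unfolding set_lebesgue_integral_def
  by (rule Bochner_Integration.integral_nonneg) (auto split: split_indicator)

locale absh =
  fixes h :: "real \<Rightarrow> real" and K0 A B A2 :: real
  assumes hm: "h \<in> borel_measurable borel"
  and hK: "\<And>t. 0 < t \<Longrightarrow> t < 1 \<Longrightarrow> h t \<le> K0"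
  and hA: "\<And>t. 0 < t \<Longrightarrow> t < 1 \<Longrightarrow> \<bar>h t\<bar> \<le> A + B / sqrt t"
  and hA2: "\<And>t. 1/2 \<le> t \<Longrightarrow> t < 1 \<Longrightarrow> \<bar>h t\<bar> \<le> A2"
  and B_nn: "0 \<le> B"
begin

definition Hf :: "real \<Rightarrow> real" where "Hf s = (LINT t:{0..s}|lborel. h t)"

lemma h_int: "set_integrable lborel {0<..<1} h"
proof -
  have c: "set_integrable lborel {0<..<1::real} (\<lambda>t. A)"
    using bdd_set_integrable[of "\<lambda>_. A" "\<bar>A\<bar>" "{0<..<1}"] by simp
  have "set_integrable lborel {0<..<1} (\<lambda>t. B * (1 / sqrt t))"
    using inv_sqrt_int by (rule set_integrable_mult_right)
  then have w: "set_integrable lborel {0<..<1} (\<lambda>t. A + B * (1 / sqrt t))"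
    by (rule set_integral_add(1)[OF c])
  show ?thesis
  proof (rule set_integrable_bound[OF w])
    show "set_borel_measurable lborel {0<..<1} h"
      unfolding set_borel_measurable_def using hm by measurable
    show "AE x\<in>{0<..<1} in lborel. norm (h x) \<le> norm (A + B * (1 / sqrt x))"
      by (rule AE_I2) (use hA in \<open>fastforce\<close>)
  qed
qed

lemma h_int_sub: "S \<in> sets borel \<Longrightarrow> S \<subseteq> {0<..<1} \<Longrightarrow> set_integrable lborel S h"
  by (rule set_integrable_subset[OF h_int]) auto

lemma Hf_eq: "0 \<le> s \<Longrightarrow> Hf s = (LBINT t=ereal 0..ereal s. h t)"
  unfolding Hf_def using interval_integral_Icc[of 0 s h] by simp

lemma Hf_Ioo: "0 \<le> s \<Longrightarrow> Hf s = (LINT t:{0<..<s}|lborel. h t)"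
  unfolding Hf_eq by (simp add: interval_integral_Ioo)

lemma Hf0: "Hf 0 = 0"
  by (simp add: Hf_Ioo set_integral_empty)

lemma ileb: "interval_lebesgue_integrable lborel 0 1 h"
  unfolding interval_lebesgue_integrable_def using h_int by (simp add: zero_ereal_def one_ereal_def)

lemma Hf_split:
  assumes "0 \<le> x" "x \<le> 1"
  shows "Hf 1 = Hf x + (LINT t:{x<..<1}|lborel. h t)"
proof -
  have "(LBINT t=ereal 0..ereal x. h t) + (LBINT t=ereal x..ereal 1. h t) = (LBINT t=ereal 0..ereal 1. h t)"
    by (rule interval_integral_sum) (use assms ileb in \<open>simp add: min_def max_def zero_ereal_def one_ereal_def\<close>)
  then show ?thesis using assms by (simp add: Hf_eq interval_integral_Ioo)
qed

definition I1 where "I1 = (LINT t:{0<..<1}|lborel. \<bar>h t\<bar>)"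

lemma Hf_abs: assumes "0 \<le> x" "x \<le> 1" shows "\<bar>Hf x\<bar> \<le> I1"
proof -
  have "\<bar>Hf x\<bar> \<le> (LINT t:{0<..<x}|lborel. \<bar>h t\<bar>)"
  proof -
    have "set_integrable lborel {0<..<x} h" using assms by (intro h_int_sub) auto
    then show ?thesis unfolding Hf_Ioo[OF assms(1)] using set_integral_norm_bound by fastforce
  qed
  also have "\<dots> \<le> I1"
  proof (cases "x = 0")
    case True
    then show ?thesis unfolding I1_def by (simp add: set_integral_empty set_int_nonneg)
  next
    case False
    then have x0: "0 < x" using assms by simp
    have "{0<..<1} = {0<..<x} \<union> {x..<1}" using assms x0 by auto
    have "I1 = (LINT t:{0<..<x}|lborel. \<bar>h t\<bar>) + (LINT t:{x..<1}|lborel. \<bar>h t\<bar>)"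
    proof -
      have i1: "set_integrable lborel {0<..<x} (\<lambda>t. \<bar>h t\<bar>)"
        using assms by (intro set_integrable_abs h_int_sub) auto
      have i2: "set_integrable lborel {x..<1} (\<lambda>t. \<bar>h t\<bar>)"
        using x0 by (intro set_integrable_abs h_int_sub) auto
      have "{0<..<x} \<inter> {x..<1} = {}" by auto
      from set_integral_Un[OF this i1 i2] \<open>{0<..<1} = _\<close> show ?thesis unfolding I1_def by simp
    qed
    moreover have "0 \<le> (LINT t:{x..<1}|lborel. \<bar>h t\<bar>)" by (rule set_int_nonneg) auto
    ultimately show ?thesis by simp
  qed
  finally show ?thesis .
qed


lemma I1_nn: "0 \<le> I1" unfolding I1_def by (rule set_int_nonneg) auto

lemma h_int_Icc: "set_integrable lborel {0..1} h"
  by (rule set_integrable_Icc_of_Ioo[OF hm h_int])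

lemma Hf_cont: "continuous_on {0..1} Hf"
proof -
  have "h integrable_on {0..1}" by (rule set_borel_integral_eq_integral(1)[OF h_int_Icc])
  then have c: "continuous_on {0..1} (\<lambda>x. integral {0..x} h)"
    by (rule indefinite_integral_continuous_1)
  have "Hf x = integral {0..x} h" if "x \<in> {0..1}" for x
  proof -
    have "set_integrable lborel {0..x} h"
      by (rule set_integrable_subset[OF h_int_Icc]) (use that in auto)
    then show ?thesis unfolding Hf_def by (rule set_borel_integral_eq_integral(2))
  qed
  then show ?thesis using continuous_on_cong[of "{0..1}" "{0..1}" Hf "\<lambda>x. integral {0..x} h"] c by blast
qed

lemma const_int_Ioo: "set_integrable lborel {a<..<b::real} (\<lambda>_. c::real)"
proof (cases "a \<le> b")
  case True
  then show ?thesis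
    using bdd_set_integrable[of "\<lambda>_. c" "\<bar>c\<bar>" "{a<..<b}"] by simp
next
  case False then have "{a<..<b} = {}" by auto
  then show ?thesis by simp
qed

lemma const_integral_Ioo: "a \<le> b \<Longrightarrow> (LINT t:{a<..<b::real}|lborel. c) = c * (b - a)"
  by (simp add: set_integral_const)

lemma HfK: assumes "x \<in> {0..1}" shows "Hf x \<le> max K0 0 * x"
proof -
  have "Hf x = (LINT t:{0<..<x}|lborel. h t)" using assms by (simp add: Hf_Ioo)
  also have "\<dots> \<le> (LINT t:{0<..<x}|lborel. max K0 0)"
  proof (rule set_integral_mono[OF h_int_sub const_int_Ioo])
    fix t assume t: "t \<in> {0<..<x}"
    then show "h t \<le> max K0 0" using hK[of t] assms by auto
  qed (use assms in auto)
  also have "\<dots> = max K0 0 * x" using assms by (simp add: const_integral_Ioo)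
  finally show ?thesis .
qed

definition K2 where "K2 = max A2 (4 * I1)"

lemma K2_nn: "0 \<le> K2" using I1_nn by (simp add: K2_def max_def)

lemma HfK2: assumes x: "x \<in> {0..1}" shows "Hf x \<le> Hf 1 + K2 * (1 - x)"
proof (cases "1/2 \<le> x")
  case True
  have "- A2 * (1 - x) = (LINT t:{x<..<1}|lborel. - A2)" using x by (simp add: const_integral_Ioo)
  also have "\<dots> \<le> (LINT t:{x<..<1}|lborel. h t)"
  proof (rule set_integral_mono[OF const_int_Ioo h_int_sub])
    fix t assume "t \<in> {x<..<1}"
    then show "- A2 \<le> h t" using hA2[of t] True by (auto simp: abs_le_iff)
  qed (use True in auto)
  also have "\<dots> = Hf 1 - Hf x" using Hf_split[of x] x by simp
  finally have 1: "- A2 * (1 - x) \<le> Hf 1 - Hf x" .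
  have "A2 * (1 - x) \<le> K2 * (1 - x)" using x by (intro mult_right_mono) (auto simp: K2_def)
  then show ?thesis using 1 by simp
next
  case False
  have a: "Hf x \<le> I1" using Hf_abs[of x] x by simp
  have b: "- I1 \<le> Hf 1" using Hf_abs[of 1] by simp
  have "4 * I1 * (1 / 2) \<le> K2 * (1 - x)"
    using False I1_nn K2_nn by (intro mult_mono) (auto simp: K2_def)
  then show ?thesis using a b by simp
qed

sublocale E: env Hf "max K0 0" K2
proof
  show "continuous_on {0..1} Hf" by (rule Hf_cont)
  show "Hf 0 = 0" by (rule Hf0)
  show "0 \<le> max K0 0" by simp
  show "0 \<le> K2" by (rule K2_nn)
  show "\<And>x. x \<in> {0..1} \<Longrightarrow> Hf x \<le> max K0 0 * x" by (rule HfK)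
  show "\<And>x. x \<in> {0..1} \<Longrightarrow> Hf x \<le> Hf 1 + K2 * (1 - x)" by (rule HfK2)
qed

end

lemma Ioo_to_Ico:
  fixes f :: "real \<Rightarrow> real"
  assumes i: "set_integrable lborel {a<..<b} f"
  shows "set_integrable lborel {a..<b} f"
proof (cases "a < b")
  case True
  have "set_integrable lborel {a} f"
  proof -
    have "emeasure lborel {a} < top" by simp
    then have "integrable lborel (indicator {a} :: real \<Rightarrow> real)"
      by (intro integrable_real_indicator) auto
    then have "integrable lborel (\<lambda>x. indicator {a} x * f a)"
      by (rule integrable_mult_left)
    moreover have "(\<lambda>x. indicator {a} x * f a) = (\<lambda>x. indicator {a} x *\<^sub>R f x)"
      by (auto simp: indicator_def fun_eq_iff)
    ultimately show ?thesis by (simp add: set_integrable_def)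
  qed
  then have "set_integrable lborel ({a<..<b} \<union> {a}) f"
    by (intro set_integrable_Un i) auto
  moreover have "{a<..<b} \<union> {a} = {a..<b}" using True by auto
  ultimately show ?thesis by simp
next
  case False then have "{a..<b} = {}" by auto
  then show ?thesis by simp
qed

lemma pw_ineq:
  fixes g d :: real
  assumes "0 \<le> g"
  shows "- (1/2) * g^2 - g * d \<le> - (1/2) * (max 0 (-d))^2 - max 0 (-d) * d - (1/2) * (g - max 0 (-d))^2"
proof (cases "d \<le> 0")
  case True
  then have "max 0 (-d) = -d" by simp
  then show ?thesis by (simp add: power2_eq_square algebra_simps)
next
  case False
  then have "max 0 (-d) = 0" by simp
  moreover have "0 \<le> g * d" using False assms by simp
  ultimately show ?thesis by (simp add: power2_eq_square)
qed

lemma rc_ae_eq: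
  fixes G F :: "real \<Rightarrow> real"
  assumes rcG: "\<And>s. s \<in> {0..<1} \<Longrightarrow> continuous (at_right s) G"
    and rcF: "\<And>s. s \<in> {0..<1} \<Longrightarrow> continuous (at_right s) F"
    and int: "set_integrable lborel {0..<1} (\<lambda>s. (G s - F s)^2)"
    and z: "(LINT s:{0..<1}|lborel. (G s - F s)^2) = 0"
  shows "\<And>s. s \<in> {0..<1} \<Longrightarrow> G s = F s"
proof (rule ccontr)
  fix s assume s: "s \<in> {0..<1}" and ne: "G s \<noteq> F s"
  define g where "g x = (G x - F x)^2" for x
  have ae: "AE x in lborel. indicator {0..<1} x *\<^sub>R g x = 0"
  proof -
    have "integrable lborel (\<lambda>x. indicator {0..<1} x *\<^sub>R g x)"
      using int by (simp add: set_integrable_def g_def)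
    moreover have "AE x in lborel. 0 \<le> indicator {0..<1} x *\<^sub>R g x"
      by (auto simp: g_def)
    moreover have "integral\<^sup>L lborel (\<lambda>x. indicator {0..<1} x *\<^sub>R g x) = 0"
      using z by (simp add: set_lebesgue_integral_def g_def)
    ultimately show ?thesis by (simp add: integral_nonneg_eq_0_iff_AE)
  qed
  have "(g \<longlongrightarrow> g s) (at_right s)"
    unfolding g_def
    using rcG[OF s] rcF[OF s] by (intro tendsto_intros) (auto simp: continuous_within)
  moreover have "0 < g s" using ne by (simp add: g_def)
  ultimately have "\<forall>\<^sub>F x in at_right s. 0 < g x" by (rule order_tendstoD(1))
  then obtain b where b: "s < b" "\<And>y. s < y \<Longrightarrow> y < b \<Longrightarrow> 0 < g y"
    unfolding eventually_at_right_field by blast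
  define b' where "b' = min b 1"
  have b': "s < b'" using b s by (simp add: b'_def)
  have "AE x in lborel. x \<notin> {s<..<b'}"
    using ae
  proof (rule eventually_mono)
    fix x assume x: "indicator {0..<1} x *\<^sub>R g x = 0"
    show "x \<notin> {s<..<b'}"
    proof
      assume "x \<in> {s<..<b'}"
      then have "x \<in> {0..<1}" "0 < g x" using s b by (auto simp: b'_def)
      then show False using x by simp
    qed
  qed
  then have "{s<..<b'} \<in> null_sets lborel"
    by (subst AE_iff_null_sets) auto
  then have "emeasure lborel {s<..<b'} = 0" by auto
  then show False using b' by simp
qed

abbreviation cdf' :: "'a measure \<Rightarrow> ('a \<Rightarrow> real) \<Rightarrow> real \<Rightarrow> real" where
  "cdf' M X x \<equiv> measure M {\<omega>\<in>space M. X \<omega> \<le> x}"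

lemma quantile_meas:
  assumes P: "prob_space M"
    and ok: "\<And>s. 0 \<le> s \<Longrightarrow> s < 1 \<Longrightarrow> {x. cdf' M X x > s} \<noteq> {} \<and> bdd_below {x. cdf' M X x > s}"
  shows "quantile M X \<in> borel_measurable borel"
proof (rule borel_measurable_piecewise_mono[of "{{..<0}, {0..<1}, {1..}}"])
  show "countable {{..<0::real}, {0..<1}, {1..}}" by simp
  show "\<And>c. c \<in> {{..<0::real}, {0..<1}, {1..}} \<Longrightarrow> c \<in> sets borel" by auto
  show "\<Union> {{..<0::real}, {0..<1}, {1..}} = UNIV" by auto
  fix c assume c: "c \<in> {{..<0::real}, {0..<1}, {1..}}"
  have neg: "quantile M X s = Inf UNIV" if "s < 0" for s
  proof -
    have "{x. cdf' M X x > s} = UNIV" using that by (auto intro: less_le_trans[OF _ measure_nonneg])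
    then show ?thesis by (simp add: quantile_def)
  qed
  have big: "quantile M X s = Inf {}" if "1 \<le> s" for s
  proof -
    have "{x. cdf' M X x > s} = {}"
      using that prob_space.prob_le_1[OF P] by (auto simp: not_less) (meson le_less_trans not_le)
    then show ?thesis by (simp add: quantile_def)
  qed
  show "mono_on c (quantile M X)"
  proof (cases "c = {..<0}")
    case True then show ?thesis by (auto intro!: mono_onI simp: neg)
  next
    case False
    show ?thesis
    proof (cases "c = {1..}")
      case True then show ?thesis by (auto intro!: mono_onI simp: big)
    next
      case False
      then have c01: "c = {0..<1}" using c \<open>c \<noteq> {..<0}\<close> by auto
      show ?thesis unfolding c01
      proof (rule mono_onI)
        fix r s :: real assume r: "r \<in> {0..<1}" and s: "s \<in> {0..<1}" and rs: "r \<le> s"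
        have "Inf {x. cdf' M X x > r} \<le> Inf {x. cdf' M X x > s}"
          by (rule cInf_superset_mono) (use ok[of s] ok[of r] r s rs in auto)
        then show "quantile M X r \<le> quantile M X s" by (simp add: quantile_def)
      qed
    qed
  qed
qed

lemma set_bounds:
  fixes S :: "real set"
  assumes "hi \<in> S" "\<And>x. x \<in> S \<Longrightarrow> lo \<le> x"
  shows "S \<noteq> {}" "bdd_below S" "lo \<le> Inf S" "Inf S \<le> hi"
proof -
  show "S \<noteq> {}" using assms by auto
  show b: "bdd_below S" using assms by (auto simp: bdd_below_def)
  show "lo \<le> Inf S" using assms by (intro cInf_greatest) auto
  show "Inf S \<le> hi" using assms b by (intro cInf_lower) auto
qed

lemma X0_set:
  assumes P: "prob_space M" and Xm: "X0 \<in> borel_measurable M" and C: "AE \<omega> in M. \<bar>X0 \<omega>\<bar> \<le> C"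
    and s: "0 \<le> s" "s < 1"
  shows "C \<in> {x. cdf' M X0 x > s}" "\<And>x. x \<in> {x. cdf' M X0 x > s} \<Longrightarrow> - C \<le> x"
proof -
  have ev: "{\<omega>\<in>space M. X0 \<omega> \<le> x} \<in> sets M" for x using Xm by measurable
  have "cdf' M X0 C = 1"
    using C by (subst prob_space.prob_Collect_eq_1[OF P ev]) (auto elim!: eventually_mono)
  then show "C \<in> {x. cdf' M X0 x > s}" using s by simp
  fix x assume x: "x \<in> {x. cdf' M X0 x > s}"
  show "- C \<le> x"
  proof (rule ccontr)
    assume "\<not> - C \<le> x"
    then have "cdf' M X0 x = 0"
      using C by (subst prob_space.prob_Collect_eq_0[OF P ev]) (auto elim!: eventually_mono)
    then show False using x s by simp
  qed
qed

lemma rho_set: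
  assumes P: "prob_space M" and rm: "\<rho> \<in> borel_measurable M"
    and ri: "integrable M (\<lambda>\<omega>. (\<rho> \<omega>)^2)" and rp: "AE \<omega> in M. \<rho> \<omega> > 0"
    and s: "0 \<le> s" "s < 1"
  defines "E2 \<equiv> integral\<^sup>L M (\<lambda>\<omega>. (\<rho> \<omega>)^2)"
  shows "sqrt (E2 / (1 - s)) + 1 \<in> {x. cdf' M \<rho> x > s}" "\<And>x. x \<in> {x. cdf' M \<rho> x > s} \<Longrightarrow> 0 \<le> x"
proof -
  have ev: "{\<omega>\<in>space M. \<rho> \<omega> \<le> x} \<in> sets M" for x using rm by measurable
  have E2: "0 \<le> E2" unfolding E2_def by (rule Bochner_Integration.integral_nonneg) simp
  define x0 where "x0 = sqrt (E2 / (1 - s)) + 1"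
  have q0: "0 \<le> E2 / (1 - s)" using E2 s by simp
  then have x0: "0 < x0" unfolding x0_def using real_sqrt_ge_zero by (smt (verit))
  have "measure M {\<omega>\<in>space M. x0^2 \<le> (\<rho> \<omega>)^2} \<le> E2 / x0^2"
    unfolding E2_def
    by (rule integral_Markov_inequality_measure[OF ri]) (use x0 rm in auto)
  moreover have "measure M {\<omega>\<in>space M. \<not> \<rho> \<omega> \<le> x0} \<le> measure M {\<omega>\<in>space M. x0^2 \<le> (\<rho> \<omega>)^2}"
  proof (rule finite_measure.finite_measure_mono)
    show "finite_measure M" using P by (simp add: prob_space_def)
    show "{\<omega>\<in>space M. \<not> \<rho> \<omega> \<le> x0} \<subseteq> {\<omega>\<in>space M. x0^2 \<le> (\<rho> \<omega>)^2}"
      using x0 by (auto intro!: power_mono)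
    show "{\<omega>\<in>space M. x0^2 \<le> (\<rho> \<omega>)^2} \<in> sets M" using rm by measurable
  qed
  moreover have "measure M {\<omega>\<in>space M. \<not> \<rho> \<omega> \<le> x0} = 1 - cdf' M \<rho> x0"
  proof -
    have "space M - {\<omega>\<in>space M. \<rho> \<omega> \<le> x0} = {\<omega>\<in>space M. \<not> \<rho> \<omega> \<le> x0}" by auto
    then show ?thesis using prob_space.prob_compl[OF P ev[of x0]] by simp
  qed
  moreover have "E2 / x0^2 < 1 - s"
  proof -
    have "sqrt (E2 / (1 - s)) < x0" by (simp add: x0_def)
    then have "(sqrt (E2 / (1 - s)))^2 < x0^2" by (intro power_strict_mono) (auto simp: q0)
    then have "E2 / (1 - s) < x0^2" using q0 by simp
    then show ?thesis using s x0 by (simp add: divide_less_eq mult.commute)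
  qed
  ultimately have "s < cdf' M \<rho> x0" by linarith
  then show "sqrt (E2 / (1 - s)) + 1 \<in> {x. cdf' M \<rho> x > s}" by (simp add: x0_def)
  fix x assume x: "x \<in> {x. cdf' M \<rho> x > s}"
  show "0 \<le> x"
  proof (rule ccontr)
    assume "\<not> 0 \<le> x"
    then have "cdf' M \<rho> x = 0"
      using rp by (subst prob_space.prob_Collect_eq_0[OF P ev]) (auto elim!: eventually_mono)
    then show False using x s by simp
  qed
qed

lemma emeasure_lborel_Ioo_fin: "emeasure lborel {x<..<y::real} < top"
proof (cases "x \<le> y")
  case True then show ?thesis by (simp add: emeasure_lborel_Ioo)
next
  case False then have "{x<..<y} = {}" by auto
  then show ?thesis by simp
qed

lemma sq_set_meas:
  fixes G :: "real \<Rightarrow> real"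
  assumes "(\<lambda>x. indicator {0..<1} x * G x) \<in> borel_measurable borel"
  shows "set_borel_measurable lborel {0..<1} (\<lambda>s. (G s)^2)"
proof -
  have "(\<lambda>x. (indicator {0..<1} x * G x)^2) \<in> borel_measurable borel"
    using assms by measurable
  moreover have "(\<lambda>x. (indicator {0..<1} x * G x)^2) = (\<lambda>x. indicator {0..<1} x *\<^sub>R (G x)^2)"
    by (auto simp: indicator_def fun_eq_iff)
  ultimately show ?thesis by (simp add: set_borel_measurable_def)
qed

lemma mono_bdd_Qclass:
  fixes G :: "real \<Rightarrow> real"
  assumes m: "mono_on {0..<1} G" and b: "\<And>s. s \<in> {0..<1} \<Longrightarrow> \<bar>G s\<bar> \<le> C"
    and rc: "\<And>s. s \<in> {0..<1} \<Longrightarrow> continuous (at_right s) G"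
  shows "G \<in> Qclass"
proof -
  have ci: "set_integrable lborel {0..<1::real} (\<lambda>s. C^2)"
    using bdd_set_integrable[of "\<lambda>_. C^2" "C^2" "{0..<1}"] by simp
  have "set_integrable lborel {0..<1} (\<lambda>s. (G s)^2)"
  proof (rule set_integrable_bound[OF ci sq_set_meas[OF mono_set_meas[OF m]]])
    show "AE x\<in>{0..<1} in lborel. norm ((G x)\<^sup>2) \<le> norm (C\<^sup>2)"
    proof (rule AE_I2, rule impI)
      fix x :: real assume "x \<in> {0..<1}"
      then have "\<bar>G x\<bar> \<le> \<bar>C\<bar>" using b by fastforce
      then have "\<bar>G x\<bar>^2 \<le> \<bar>C\<bar>^2" by (intro power_mono) auto
      then show "norm ((G x)\<^sup>2) \<le> norm (C\<^sup>2)" by simp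
    qed
  qed
  then show ?thesis using m rc by (auto simp: Qclass_def)
qed

context absh
begin

abbreviation "Hh \<equiv> concave_envelope Hf"

definition Gs :: "real \<Rightarrow> real" where
  "Gs s = max 0 (- rderiv Hh s)"

lemma Gs_eq: "s \<in> {0..<1} \<Longrightarrow> Gs s = max 0 (- E.dd s)"
  unfolding Gs_def using E.rderiv_eq by auto

lemma Gs_nn: "0 \<le> Gs s" by (simp add: Gs_def)

lemma Gs_bnd: "s \<in> {0..<1} \<Longrightarrow> \<bar>Gs s\<bar> \<le> E.M"
  using Gs_eq[of s] E.dd_le_K[of s] E.dd_ge_K2[of s] E.K_nn E.K2_nn
  by (auto simp: E.M_def)

lemma Gs_mono: "mono_on {0..<1} Gs"
proof (rule mono_onI)
  fix r s :: real assume r: "r \<in> {0..<1}" and s: "s \<in> {0..<1}" and rs: "r \<le> s"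
  then have "E.dd s \<le> E.dd r" by (intro E.dd_antimono) auto
  then show "Gs r \<le> Gs s" using r s by (simp add: Gs_eq max_def)
qed

lemma Gs_rc: assumes s: "s \<in> {0..<1}" shows "continuous (at_right s) Gs"
proof -
  have "((\<lambda>x. max 0 (- E.dd x)) \<longlongrightarrow> max 0 (- E.dd s)) (at_right s)"
    using E.dd_rcont[of s] s by (intro tendsto_intros) auto
  moreover have "\<forall>\<^sub>F x in at_right s. max 0 (- E.dd x) = Gs x"
    using eventually_at_right_real[of s 1] s
    by (auto elim!: eventually_mono simp: Gs_eq)
  ultimately have "(Gs \<longlongrightarrow> max 0 (- E.dd s)) (at_right s)"
    by (rule Lim_transform_eventually)
  then show ?thesis using Gs_eq[OF s] by (simp add: continuous_within)
qed

lemma Gs_Q: "Gs \<in> Qclass"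
  by (rule mono_bdd_Qclass[OF Gs_mono Gs_bnd Gs_rc])

lemma A2_nn: "0 \<le> A2" using hA2[of "3/4"] by simp

lemma w_int: "set_integrable lborel {0<..<1} (\<lambda>t. A + B * (1 / sqrt t))"
proof -
  have c: "set_integrable lborel {0<..<1::real} (\<lambda>t. A)"
    using bdd_set_integrable[of "\<lambda>_. A" "\<bar>A\<bar>" "{0<..<1}"] by simp
  have "set_integrable lborel {0<..<1} (\<lambda>t. B * (1 / sqrt t))"
    using inv_sqrt_int by (rule set_integrable_mult_right)
  then show ?thesis by (rule set_integral_add(1)[OF c])
qed

lemma Gh_int:
  assumes G: "G \<in> Qclass" and Gnn: "\<And>s. s \<in> {0..<1} \<Longrightarrow> 0 \<le> G s"
  shows "set_integrable lborel {0..<1} (\<lambda>s. G s * h s)"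
proof -
  have m: "mono_on {0..<1} G" using G by (simp add: Qclass_def)
  have sq: "set_integrable lborel {0..<1} (\<lambda>s. (G s)^2)" using G by (simp add: Qclass_def)
  have one: "set_integrable lborel {0..<1::real} (\<lambda>s. 1::real)"
    using bdd_set_integrable[of "\<lambda>_. 1" 1 "{0..<1}"] by simp
  have b2: "set_integrable lborel {0..<1} (\<lambda>s. A2 * (1 + (G s)^2))"
    by (intro set_integrable_mult_right set_integral_add(1) one sq)
  have b2': "set_integrable lborel {0<..<1} (\<lambda>s. A2 * (1 + (G s)^2))"
    by (rule set_integrable_subset[OF b2]) auto
  have b1: "set_integrable lborel {0<..<1} (\<lambda>t. G (1/2) * (A + B * (1 / sqrt t)))"
    by (intro set_integrable_mult_right w_int)
  have bnd: "set_integrable lborel {0<..<1} (\<lambda>t. G (1/2) * (A + B * (1 / sqrt t)) + A2 * (1 + (G t)^2))"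
    by (rule set_integral_add(1)[OF b1 b2'])
  have meas: "set_borel_measurable lborel {0<..<1} (\<lambda>s. G s * h s)"
  proof -
    have "(\<lambda>x. (indicator {0..<1} x * G x) * (indicator {0<..<1} x * h x)) \<in> borel_measurable borel"
      using mono_set_meas[OF m] hm by measurable
    moreover have "(\<lambda>x. (indicator {0..<1} x * G x) * (indicator {0<..<1} x * h x))
        = (\<lambda>x. indicator {0<..<1} x *\<^sub>R (G x * h x))"
      by (auto simp: indicator_def fun_eq_iff)
    ultimately show ?thesis by (simp add: set_borel_measurable_def)
  qed
  have "set_integrable lborel {0<..<1} (\<lambda>s. G s * h s)"
  proof (rule set_integrable_bound[OF bnd meas], rule AE_I2, rule impI)
    fix t :: real assume t: "t \<in> {0<..<1}"
    have Gt: "0 \<le> G t" using Gnn t by auto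
    have G12: "0 \<le> G (1/2)" using Gnn by auto
    have hb: "\<bar>h t\<bar> \<le> A + B * (1 / sqrt t)" using hA[of t] t by simp
    have t1: "0 \<le> G (1/2) * (A + B * (1 / sqrt t))"
      using G12 hb by (intro mult_nonneg_nonneg) linarith+
    have t2: "0 \<le> A2 * (1 + (G t)^2)" using A2_nn by simp
    have "\<bar>G t * h t\<bar> \<le> G (1/2) * (A + B * (1 / sqrt t)) + A2 * (1 + (G t)^2)"
    proof (cases "t \<le> 1/2")
      case True
      have "G t \<le> G (1/2)" using m True t by (auto intro: mono_onD)
      then have "\<bar>G t * h t\<bar> \<le> G (1/2) * (A + B * (1 / sqrt t))"
        using Gt hb by (simp add: abs_mult) (meson abs_ge_zero mult_mono order_trans)
      then show ?thesis using t2 by linarith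
    next
      case False
      have "\<bar>h t\<bar> \<le> A2" using hA2[of t] False t by auto
      then have "\<bar>G t * h t\<bar> \<le> G t * A2" using Gt by (simp add: abs_mult mult_left_mono)
      also have "\<dots> \<le> (1 + (G t)^2) * A2"
        using abs_le_1_sq[of "G t"] Gt A2_nn by (intro mult_right_mono) (auto simp: power2_eq_square)
      finally show ?thesis using t1 by (simp add: mult.commute)
    qed
    then show "norm (G t * h t) \<le> norm (G (1/2) * (A + B * (1 / sqrt t)) + A2 * (1 + (G t)^2))"
      using t1 t2 by simp
  qed
  then show ?thesis by (rule Ioo_to_Ico)
qed

lemma Gd_int:
  assumes G: "G \<in> Qclass"
  shows "set_integrable lborel {0..<1} (\<lambda>s. G s * E.ddz s)"
proof -
  have m: "mono_on {0..<1} G" using G by (simp add: Qclass_def)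
  have sq: "set_integrable lborel {0..<1} (\<lambda>s. (G s)^2)" using G by (simp add: Qclass_def)
  have one: "set_integrable lborel {0..<1::real} (\<lambda>s. 1::real)"
    using bdd_set_integrable[of "\<lambda>_. 1" 1 "{0..<1}"] by simp
  have b: "set_integrable lborel {0..<1} (\<lambda>s. E.M * (1 + (G s)^2))"
    by (intro set_integrable_mult_right set_integral_add(1) one sq)
  have meas: "set_borel_measurable lborel {0..<1} (\<lambda>s. G s * E.ddz s)"
  proof -
    have "(\<lambda>x. (indicator {0..<1} x * G x) * E.ddz x) \<in> borel_measurable borel"
      using mono_set_meas[OF m] E.ddz_meas by measurable
    moreover have "(\<lambda>x. (indicator {0..<1} x * G x) * E.ddz x)
        = (\<lambda>x. indicator {0..<1} x *\<^sub>R (G x * E.ddz x))"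
      by (auto simp: indicator_def fun_eq_iff)
    ultimately show ?thesis by (simp add: set_borel_measurable_def)
  qed
  show ?thesis
  proof (rule set_integrable_bound[OF b meas], rule AE_I2, rule impI)
    fix t :: real assume t: "t \<in> {0..<1}"
    have "\<bar>G t * E.ddz t\<bar> \<le> \<bar>G t\<bar> * E.M"
      using E.ddz_bnd[of t] by (simp add: abs_mult mult_left_mono)
    also have "\<dots> \<le> (1 + (G t)^2) * E.M"
      using abs_le_1_sq[of "G t"] E.M_nn by (intro mult_right_mono) (auto simp: power2_eq_square)
    finally show "norm (G t * E.ddz t) \<le> norm (E.M * (1 + (G t)^2))"
      using E.M_nn by (simp add: mult.commute)
  qed
qed


lemma upset:
  fixes G :: "real \<Rightarrow> real"
  assumes m: "mono_on {0..<1} G" and ne: "{s\<in>{0..<1}. u < G s} \<noteq> {}"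
  defines "S \<equiv> {s\<in>{0..<1}. u < G s}"
  shows "Inf S \<in> {0..<1}" "{Inf S<..<1} \<subseteq> S" "S \<subseteq> {Inf S..<1}"
proof -
  have bdd: "bdd_below S" unfolding S_def bdd_below_def by (intro exI[of _ 0]) auto
  have ne': "S \<noteq> {}" using ne by (simp add: S_def)
  have lo: "0 \<le> Inf S" by (rule cInf_greatest[OF ne']) (auto simp: S_def)
  obtain s0 where s0: "s0 \<in> S" using ne' by auto
  have "Inf S \<le> s0" by (rule cInf_lower[OF s0 bdd])
  moreover have "s0 < 1" using s0 by (simp add: S_def)
  ultimately show "Inf S \<in> {0..<1}" using lo by simp
  show "S \<subseteq> {Inf S..<1}"
  proof
    fix x assume x: "x \<in> S"
    then have "Inf S \<le> x" by (rule cInf_lower[OF _ bdd])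
    then show "x \<in> {Inf S..<1}" using x by (simp add: S_def)
  qed
  show "{Inf S<..<1} \<subseteq> S"
  proof
    fix x assume x: "x \<in> {Inf S<..<1}"
    then obtain s where s: "s \<in> S" "s < x" using cInf_less_iff[OF ne' bdd, of x] by auto
    then have "G s \<le> G x" using x m by (auto simp: S_def intro!: mono_onD[OF m])
    then show "x \<in> S" using s x lo by (auto simp: S_def)
  qed
qed

lemma phi_meas: "(\<lambda>t. h t - E.ddz t) \<in> borel_measurable borel"
  using hm E.ddz_meas by measurable

lemma inner_int:
  fixes G :: "real \<Rightarrow> real"
  assumes m: "mono_on {0..<1} G" and ne: "{s\<in>{0..<1}. u < G s} \<noteq> {}"
  defines "S \<equiv> {s\<in>{0..<1}. u < G s}"
  shows "(LINT t:S|lborel. h t - E.ddz t) = Hh (Inf S) - Hf (Inf S)"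
proof -
  define a where "a = Inf S"
  note U = upset[OF m ne, folded S_def a_def]
  have Sdec: "S = {a<..<1} \<union> (S \<inter> {a})" using U by auto
  have Sm: "S \<in> sets borel"
  proof -
    have "S \<inter> {a} \<in> sets borel" by (cases "a \<in> S") auto
    then show ?thesis by (subst Sdec) auto
  qed
  have "(LINT t:S|lborel. h t - E.ddz t) = (LINT t:{a<..<1}|lborel. h t - E.ddz t)"
  proof (rule set_integral_cong_set)
    show "set_borel_measurable lborel {a<..<1} (\<lambda>t. h t - E.ddz t)"
      unfolding set_borel_measurable_def using phi_meas by measurable
    show "set_borel_measurable lborel S (\<lambda>t. h t - E.ddz t)"
      unfolding set_borel_measurable_def using phi_meas Sm by measurable
    show "AE x in lborel. (x \<in> {a<..<1}) = (x \<in> S)"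
      using AE_lborel_singleton[of a] by eventually_elim (use U in auto)
  qed
  also have "\<dots> = (LINT t:{a<..<1}|lborel. h t) - (LINT t:{a<..<1}|lborel. E.ddz t)"
  proof (rule set_integral_diff(2))
    show "set_integrable lborel {a<..<1} h" using U by (intro h_int_sub) auto
    show "set_integrable lborel {a<..<1} E.ddz"
      by (rule E.ddz_int) (auto simp: emeasure_lborel_Ioo_fin)
  qed
  also have "(LINT t:{a<..<1}|lborel. h t) = Hf 1 - Hf a"
    using Hf_split[of a] U by simp
  also have "(LINT t:{a<..<1}|lborel. E.ddz t) = (LINT t:{a<..1}|lborel. E.ddz t)"
  proof -
    have "a \<le> 1" using U by simp
    then have "(LBINT t=ereal a..ereal 1. E.ddz t) = (LINT t:{a<..1}|lborel. E.ddz t)"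
      by (rule interval_integral_Ioc)
    moreover have "(LBINT t=ereal a..ereal 1. E.ddz t) = (LINT t:{a<..<1}|lborel. E.ddz t)"
      using \<open>a \<le> 1\<close> by (simp add: interval_integral_Ioo)
    ultimately show ?thesis by simp
  qed
  also have "\<dots> = Hh 1 - Hh a" using U by (intro E.ftc) auto
  finally show ?thesis using E.Hh1 by (simp add: a_def)
qed


lemma Gphi_int:
  assumes G: "G \<in> Qclass" and Gnn: "\<And>s. s \<in> {0..<1} \<Longrightarrow> 0 \<le> G s"
  shows "set_integrable lborel {0..<1} (\<lambda>s. G s * (h s - E.ddz s))"
proof -
  have "set_integrable lborel {0..<1} (\<lambda>s. G s * h s - G s * E.ddz s)"
    by (rule set_integral_diff(1)[OF Gh_int[OF G Gnn] Gd_int[OF G]])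
  then show ?thesis by (simp add: right_diff_distrib)
qed

lemma ineq_main:
  assumes G: "G \<in> Qclass" and Gnn: "\<And>s. s \<in> {0..<1} \<Longrightarrow> 0 \<le> G s"
  shows "0 \<le> (LINT s:{0..<1}|lborel. G s * (h s - E.ddz s))"
proof -
  have m: "mono_on {0..<1} G" using G by (simp add: Qclass_def)
  show ?thesis
  proof (rule layer_cake_nonneg[OF m Gnn phi_meas Gphi_int[OF G Gnn]])
    fix u :: real assume u: "0 \<le> u"
    show "0 \<le> (LINT s:{s\<in>{0..<1}. u < G s}|lborel. h s - E.ddz s)"
    proof (cases "{s\<in>{0..<1}. u < G s} = {}")
      case True
      show ?thesis unfolding True set_integral_empty by simp
    next
      case False
      note U = upset[OF m False]
      show ?thesis unfolding inner_int[OF m False]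
        using E.Hh_ge[of "Inf {s\<in>{0..<1}. u < G s}"] U(1) by simp
    qed
  qed
qed

lemma eq_main: "(LINT s:{0..<1}|lborel. Gs s * (h s - E.ddz s)) = 0"
proof (rule layer_cake_zero[OF Gs_mono _ phi_meas Gphi_int[OF Gs_Q]])
  show "\<And>s. s \<in> {0..<1} \<Longrightarrow> 0 \<le> Gs s" by (rule Gs_nn)
  show "\<And>s. s \<in> {0..<1} \<Longrightarrow> 0 \<le> Gs s" by (rule Gs_nn)
  fix u :: real assume u: "0 \<le> u"
  show "(LINT s:{s\<in>{0..<1}. u < Gs s}|lborel. h s - E.ddz s) = 0"
  proof (cases "{s\<in>{0..<1}. u < Gs s} = {}")
    case True
    show ?thesis unfolding True set_integral_empty by simp
  next
    case False
    define S where "S = {s\<in>{0..<1}. u < Gs s}"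
    define a where "a = Inf S"
    note U = upset[OF Gs_mono False, folded S_def a_def]
    have bdd: "bdd_below S" unfolding S_def bdd_below_def by (intro exI[of _ 0]) auto
    have ne': "S \<noteq> {}" using False by (simp add: S_def)
    have Sm: "t \<in> S \<longleftrightarrow> t \<in> {0..<1} \<and> u < - E.dd t" for t
      using u by (auto simp: S_def Gs_eq)
    have "Hh a = Hf a"
    proof (cases "a = 0")
      case True then show ?thesis using E.Hh0 Hf0 by simp
    next
      case False
      then have a01: "0 < a" "a < 1" using U(1) by auto
      show ?thesis
      proof (rule ccontr)
        assume "Hh a \<noteq> Hf a"
        then have "Hf a < Hh a" using E.Hh_ge[of a] a01 by simp
        then obtain \<delta> where d: "\<delta> > 0" "0 < a - \<delta>" "a + \<delta> < 1"
          and dc: "\<And>t. t \<in> {a-\<delta>..<a+\<delta>} \<Longrightarrow> E.dd t = E.dd a"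
          using E.local_affine[OF a01] by blast
        show False
        proof (cases "u < - E.dd a")
          case True
          have "a - \<delta>/2 \<in> S" using Sm[of "a - \<delta>/2"] dc[of "a - \<delta>/2"] d True by auto
          then have "a \<le> a - \<delta>/2" unfolding a_def by (rule cInf_lower[OF _ bdd])
          then show False using d by simp
        next
          case False
          have "Inf S < a + \<delta>" using d by (simp add: a_def)
          then obtain t where t: "t \<in> S" "t < a + \<delta>" using cInf_less_iff[OF ne' bdd] by auto
          have "a \<le> t" unfolding a_def by (rule cInf_lower[OF t(1) bdd])
          then have "E.dd t = E.dd a" using t d by (intro dc) auto
          then show False using t(1) Sm[of t] False by simp
        qed
      qed
    qed
    then show ?thesis using inner_int[OF Gs_mono False] by (simp add: a_def S_def)
  qed
qed

lemma rderiv_int_eq: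
  "(LINT s:{0..<1}|lborel. G s * rderiv Hh s) = (LINT s:{0..<1}|lborel. G s * E.ddz s)"
  by (rule set_lebesgue_integral_cong) (auto simp: E.ddz_def E.rderiv_eq)

lemma obj_le:
  assumes G: "G \<in> Qclass" and Gnn: "\<And>s. s \<in> {0..<1} \<Longrightarrow> 0 \<le> G s"
  shows "objective h G \<le> objective (rderiv Hh) G"
proof -
  have "(LINT s:{0..<1}|lborel. G s * (h s - E.ddz s))
      = (LINT s:{0..<1}|lborel. G s * h s) - (LINT s:{0..<1}|lborel. G s * E.ddz s)"
    using set_integral_diff(2)[OF Gh_int[OF G Gnn] Gd_int[OF G]] by (simp add: right_diff_distrib)
  then show ?thesis using ineq_main[OF G Gnn]
    unfolding objective_def rderiv_int_eq by simp
qed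

lemma obj_eq: "objective h Gs = objective (rderiv Hh) Gs"
proof -
  have "(LINT s:{0..<1}|lborel. Gs s * (h s - E.ddz s))
      = (LINT s:{0..<1}|lborel. Gs s * h s) - (LINT s:{0..<1}|lborel. Gs s * E.ddz s)"
    using set_integral_diff(2)[OF Gh_int[OF Gs_Q Gs_nn] Gd_int[OF Gs_Q]] by (simp add: right_diff_distrib)
  then show ?thesis using eq_main
    unfolding objective_def rderiv_int_eq by simp
qed


lemma diffsq_int:
  assumes G: "G \<in> Qclass"
  shows "set_integrable lborel {0..<1} (\<lambda>s. (G s - Gs s)^2)"
proof -
  have m: "mono_on {0..<1} G" using G by (simp add: Qclass_def)
  have sq: "set_integrable lborel {0..<1} (\<lambda>s. (G s)^2)" using G by (simp add: Qclass_def)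
  have sq2: "set_integrable lborel {0..<1} (\<lambda>s. (Gs s)^2)" using Gs_Q by (simp add: Qclass_def)
  have b: "set_integrable lborel {0..<1} (\<lambda>s. 2 * (G s)^2 + 2 * (Gs s)^2)"
    by (intro set_integral_add(1) set_integrable_mult_right sq sq2)
  have meas: "set_borel_measurable lborel {0..<1} (\<lambda>s. (G s - Gs s)^2)"
  proof -
    have "(\<lambda>x. (indicator {0..<1} x * G x - indicator {0..<1} x * Gs x)^2) \<in> borel_measurable borel"
      using mono_set_meas[OF m] mono_set_meas[OF Gs_mono] by measurable
    moreover have "(\<lambda>x. (indicator {0..<1} x * G x - indicator {0..<1} x * Gs x)^2)
        = (\<lambda>x. indicator {0..<1} x *\<^sub>R (G x - Gs x)^2)"
      by (auto simp: indicator_def fun_eq_iff)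
    ultimately show ?thesis by (simp add: set_borel_measurable_def)
  qed
  show ?thesis
  proof (rule set_integrable_bound[OF b meas], rule AE_I2, rule impI)
    fix t :: real
    have "0 \<le> (G t + Gs t)^2" by simp
    then have "(G t - Gs t)^2 \<le> 2 * (G t)^2 + 2 * (Gs t)^2"
      by (simp add: power2_eq_square algebra_simps)
    then show "norm ((G t - Gs t)^2) \<le> norm (2 * (G t)^2 + 2 * (Gs t)^2)" by simp
  qed
qed

lemma obj_pw:
  assumes G: "G \<in> Qclass" and Gnn: "\<And>s. s \<in> {0..<1} \<Longrightarrow> 0 \<le> G s"
  shows "objective (rderiv Hh) G + (1/2) * (LINT s:{0..<1}|lborel. (G s - Gs s)^2)
           \<le> objective (rderiv Hh) Gs"
proof -
  have sq: "set_integrable lborel {0..<1} (\<lambda>s. (G s)^2)" using G by (simp add: Qclass_def)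
  have sq2: "set_integrable lborel {0..<1} (\<lambda>s. (Gs s)^2)" using Gs_Q by (simp add: Qclass_def)
  have i1: "set_integrable lborel {0..<1} (\<lambda>s. - (1/2) * (G s)^2)"
    by (rule set_integrable_mult_right[OF sq])
  have i2: "set_integrable lborel {0..<1} (\<lambda>s. - (1/2) * (Gs s)^2)"
    by (rule set_integrable_mult_right[OF sq2])
  have i3: "set_integrable lborel {0..<1} (\<lambda>s. (1/2) * (G s - Gs s)^2)"
    by (rule set_integrable_mult_right[OF diffsq_int[OF G]])
  have j1: "set_integrable lborel {0..<1} (\<lambda>s. - (1/2) * (G s)^2 - G s * E.ddz s)"
    by (rule set_integral_diff(1)[OF i1 Gd_int[OF G]])
  have j2': "set_integrable lborel {0..<1} (\<lambda>s. - (1/2) * (Gs s)^2 - Gs s * E.ddz s)"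
    by (rule set_integral_diff(1)[OF i2 Gd_int[OF Gs_Q]])
  have j2: "set_integrable lborel {0..<1}
      (\<lambda>s. (- (1/2) * (Gs s)^2 - Gs s * E.ddz s) - (1/2) * (G s - Gs s)^2)"
    by (rule set_integral_diff(1)[OF j2' i3])
  have "(LINT s:{0..<1}|lborel. - (1/2) * (G s)^2 - G s * E.ddz s)
      \<le> (LINT s:{0..<1}|lborel. (- (1/2) * (Gs s)^2 - Gs s * E.ddz s) - (1/2) * (G s - Gs s)^2)"
  proof (rule set_integral_mono[OF j1 j2])
    fix s :: real assume s: "s \<in> {0..<1}"
    then have "Gs s = max 0 (- E.ddz s)" by (simp add: Gs_eq E.ddz_def)
    then show "- (1/2) * (G s)^2 - G s * E.ddz s
        \<le> (- (1/2) * (Gs s)^2 - Gs s * E.ddz s) - (1/2) * (G s - Gs s)^2"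
      using pw_ineq[of "G s" "E.ddz s"] Gnn[OF s] by simp
  qed
  moreover have "(LINT s:{0..<1}|lborel. - (1/2) * (G s)^2 - G s * E.ddz s)
      = (LINT s:{0..<1}|lborel. - (1/2) * (G s)^2) - (LINT s:{0..<1}|lborel. G s * E.ddz s)"
    by (rule set_integral_diff(2)[OF i1 Gd_int[OF G]])
  moreover have "(LINT s:{0..<1}|lborel. (- (1/2) * (Gs s)^2 - Gs s * E.ddz s) - (1/2) * (G s - Gs s)^2)
      = (LINT s:{0..<1}|lborel. - (1/2) * (Gs s)^2) - (LINT s:{0..<1}|lborel. Gs s * E.ddz s)
        - (1/2) * (LINT s:{0..<1}|lborel. (G s - Gs s)^2)"
    using set_integral_diff(2)[OF j2' i3] set_integral_diff(2)[OF i2 Gd_int[OF Gs_Q]]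
    by simp
  ultimately show ?thesis unfolding objective_def rderiv_int_eq by simp
qed

lemma uniq:
  assumes G: "G \<in> Qclass" and z: "(LINT s:{0..<1}|lborel. (G s - Gs s)^2) = 0"
  shows "\<forall>s\<in>{0..<1}. G s = Gs s"
  using rc_ae_eq[of G Gs, OF _ Gs_rc diffsq_int[OF G] z] G by (auto simp: Qclass_def)

lemma diffsq_nn: "0 \<le> (LINT s:{0..<1}|lborel. (G s - Gs s)^2)"
  by (rule set_int_nonneg) simp

theorem abs_main:
  shows "(\<forall>s\<in>{0..<1}. ((\<lambda>h. (Hh (s + h) - Hh s) / h) \<longlongrightarrow> rderiv Hh s) (at_right 0))
    \<and> (\<exists>L. (rderiv Hh \<longlongrightarrow> L) (at_left 1))
    \<and> (\<exists>C. \<forall>s\<in>{0..<1}. \<bar>Gs s\<bar> \<le> C)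
    \<and> Gs \<in> Qclass \<and> (\<forall>s\<in>{0..<1}. Gs s \<ge> 0)
    \<and> (\<forall>G\<in>Qclass. (\<forall>s\<in>{0..<1}. G s \<ge> 0) \<longrightarrow> objective h G \<le> objective h Gs)
    \<and> (\<forall>G\<in>Qclass. (\<forall>s\<in>{0..<1}. G s \<ge> 0) \<longrightarrow>
          objective h G = objective h Gs \<longrightarrow> (\<forall>s\<in>{0..<1}. G s = Gs s))
    \<and> (\<forall>G\<in>Qclass. (\<forall>s\<in>{0..<1}. G s \<ge> 0) \<longrightarrow>
          objective (rderiv Hh) G \<le> objective (rderiv Hh) Gs)
    \<and> (\<forall>G\<in>Qclass. (\<forall>s\<in>{0..<1}. G s \<ge> 0) \<longrightarrow>
          objective (rderiv Hh) G = objective (rderiv Hh) Gs \<longrightarrow> (\<forall>s\<in>{0..<1}. G s = Gs s))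
    \<and> objective h Gs = objective (rderiv Hh) Gs"
proof -
  have c1: "\<forall>s\<in>{0..<1}. ((\<lambda>h. (Hh (s + h) - Hh s) / h) \<longlongrightarrow> rderiv Hh s) (at_right 0)"
    by (auto intro: E.rderiv_tendsto)
  have c2: "\<exists>L. (rderiv Hh \<longlongrightarrow> L) (at_left 1)"
  proof -
    obtain L where L: "(E.dd \<longlongrightarrow> L) (at_left 1)" using E.dd_left1 by blast
    have "\<forall>\<^sub>F x in at_left 1. E.dd x = rderiv Hh x"
      using eventually_at_left_real[of 0 1] by (auto elim!: eventually_mono simp: E.rderiv_eq)
    then have "(rderiv Hh \<longlongrightarrow> L) (at_left 1)" by (rule Lim_transform_eventually[OF L])
    then show ?thesis by blast
  qed
  have c3: "\<exists>C. \<forall>s\<in>{0..<1}. \<bar>Gs s\<bar> \<le> C" using Gs_bnd by blast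
  have c4: "Gs \<in> Qclass" by (rule Gs_Q)
  have c5: "\<forall>s\<in>{0..<1}. Gs s \<ge> 0" using Gs_nn by blast
  have c6: "\<forall>G\<in>Qclass. (\<forall>s\<in>{0..<1}. G s \<ge> 0) \<longrightarrow> objective h G \<le> objective h Gs"
  proof (intro ballI impI)
    fix G assume G: "G \<in> Qclass" and Gnn: "\<forall>s\<in>{0..<1}. 0 \<le> G s"
    have "objective h G \<le> objective (rderiv Hh) G" using obj_le[OF G] Gnn by simp
    also have "\<dots> \<le> objective (rderiv Hh) Gs" using obj_pw[OF G] Gnn diffsq_nn[of G] by force
    finally show "objective h G \<le> objective h Gs" using obj_eq by simp
  qed
  have c7: "\<forall>G\<in>Qclass. (\<forall>s\<in>{0..<1}. G s \<ge> 0) \<longrightarrow>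
          objective h G = objective h Gs \<longrightarrow> (\<forall>s\<in>{0..<1}. G s = Gs s)"
  proof (rule ballI, rule impI, rule impI)
    fix G assume G: "G \<in> Qclass" and Gnn: "\<forall>s\<in>{0..<1}. 0 \<le> G s"
      and eq: "objective h G = objective h Gs"
    have "objective h G \<le> objective (rderiv Hh) G" using obj_le[OF G] Gnn by simp
    then have "objective (rderiv Hh) Gs \<le> objective (rderiv Hh) G" using eq obj_eq by simp
    then have "(LINT s:{0..<1}|lborel. (G s - Gs s)^2) = 0"
      using obj_pw[OF G] Gnn diffsq_nn[of G] by force
    then show "\<forall>s\<in>{0..<1}. G s = Gs s" by (rule uniq[OF G])
  qed
  have c8: "\<forall>G\<in>Qclass. (\<forall>s\<in>{0..<1}. G s \<ge> 0) \<longrightarrow>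
          objective (rderiv Hh) G \<le> objective (rderiv Hh) Gs"
  proof (intro ballI impI)
    fix G assume G: "G \<in> Qclass" and Gnn: "\<forall>s\<in>{0..<1}. 0 \<le> G s"
    show "objective (rderiv Hh) G \<le> objective (rderiv Hh) Gs"
      using obj_pw[OF G] Gnn diffsq_nn[of G] by force
  qed
  have c9: "\<forall>G\<in>Qclass. (\<forall>s\<in>{0..<1}. G s \<ge> 0) \<longrightarrow>
          objective (rderiv Hh) G = objective (rderiv Hh) Gs \<longrightarrow> (\<forall>s\<in>{0..<1}. G s = Gs s)"
  proof (rule ballI, rule impI, rule impI)
    fix G assume G: "G \<in> Qclass" and Gnn: "\<forall>s\<in>{0..<1}. 0 \<le> G s"
      and eq: "objective (rderiv Hh) G = objective (rderiv Hh) Gs"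
    then have "(LINT s:{0..<1}|lborel. (G s - Gs s)^2) = 0"
      using obj_pw[OF G] Gnn diffsq_nn[of G] by force
    then show "\<forall>s\<in>{0..<1}. G s = Gs s" by (rule uniq[OF G])
  qed
  have c10: "objective h Gs = objective (rderiv Hh) Gs" by (rule obj_eq)
  show ?thesis using c1 c2 c3 c4 c5 c6 c7 c8 c9 c10 by blast
qed

end

theorem lemma5p4:
  fixes M :: "'a measure" and \<rho> X0 :: "'a \<Rightarrow> real" and \<beta> lam :: real
  assumes "prob_space M" and "complete_measure M" and "nonatomic M"
    and "\<rho> \<in> borel_measurable M" and "integrable M (\<lambda>\<omega>. (\<rho> \<omega>)^2)"
    and "AE \<omega> in M. \<rho> \<omega> > 0"
    and "prob_space.variance M \<rho> > 0"
    and "X0 \<in> borel_measurable M" and "\<exists>C. AE \<omega> in M. \<bar>X0 \<omega>\<bar> \<le> C"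
    and "lam > 0"
  defines "H \<equiv> Hfun M \<rho> X0 \<beta> lam"
    and "Hhat \<equiv> concave_envelope (Hfun M \<rho> X0 \<beta> lam)"
    and "Gstar \<equiv> (\<lambda>s. max 0 (- rderiv (concave_envelope (Hfun M \<rho> X0 \<beta> lam)) s))"
  shows "(\<forall>s\<in>{0..<1}. ((\<lambda>h. (Hhat (s + h) - Hhat s) / h) \<longlongrightarrow> rderiv Hhat s) (at_right 0))
    \<and> (\<exists>L. (rderiv Hhat \<longlongrightarrow> L) (at_left 1))
    \<and> (\<exists>C. \<forall>s\<in>{0..<1}. \<bar>Gstar s\<bar> \<le> C)
    \<and> Gstar \<in> Qclass \<and> (\<forall>s\<in>{0..<1}. Gstar s \<ge> 0)
    \<and> (\<forall>G\<in>Qclass. (\<forall>s\<in>{0..<1}. G s \<ge> 0) \<longrightarrow>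
          objective (hdens M \<rho> X0 \<beta> lam) G \<le> objective (hdens M \<rho> X0 \<beta> lam) Gstar)
    \<and> (\<forall>G\<in>Qclass. (\<forall>s\<in>{0..<1}. G s \<ge> 0) \<longrightarrow>
          objective (hdens M \<rho> X0 \<beta> lam) G = objective (hdens M \<rho> X0 \<beta> lam) Gstar \<longrightarrow>
          (\<forall>s\<in>{0..<1}. G s = Gstar s))
    \<and> (\<forall>G\<in>Qclass. (\<forall>s\<in>{0..<1}. G s \<ge> 0) \<longrightarrow>
          objective (rderiv Hhat) G \<le> objective (rderiv Hhat) Gstar)
    \<and> (\<forall>G\<in>Qclass. (\<forall>s\<in>{0..<1}. G s \<ge> 0) \<longrightarrow>
          objective (rderiv Hhat) G = objective (rderiv Hhat) Gstar \<longrightarrow>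
          (\<forall>s\<in>{0..<1}. G s = Gstar s))
    \<and> objective (hdens M \<rho> X0 \<beta> lam) Gstar = objective (rderiv Hhat) Gstar"
proof -
  note P = assms(1)
  obtain C where C: "AE \<omega> in M. \<bar>X0 \<omega>\<bar> \<le> C" using assms(9) by blast
  define E2 where "E2 = integral\<^sup>L M (\<lambda>\<omega>. (\<rho> \<omega>)^2)"
  have E2: "0 \<le> E2" unfolding E2_def by (rule Bochner_Integration.integral_nonneg) simp
  have Qr: "0 \<le> quantile M \<rho> s \<and> quantile M \<rho> s \<le> sqrt (E2 / (1 - s)) + 1" if "0 \<le> s" "s < 1" for s
    using set_bounds[OF rho_set(1)[OF P assms(4,5,6) that] rho_set(2)[OF P assms(4,5,6) that]]
    unfolding quantile_def E2_def by simp
  have Q0: "- C \<le> quantile M X0 s \<and> quantile M X0 s \<le> C" if "0 \<le> s" "s < 1" for s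
    using set_bounds[OF X0_set(1)[OF P assms(8) C that] X0_set(2)[OF P assms(8) C that]]
    unfolding quantile_def by simp
  have qrm: "quantile M \<rho> \<in> borel_measurable borel"
    by (rule quantile_meas[OF P])
       (use set_bounds[OF rho_set(1)[OF P assms(4,5,6)] rho_set(2)[OF P assms(4,5,6)]] in auto)
  have q0m: "quantile M X0 \<in> borel_measurable borel"
    by (rule quantile_meas[OF P])
       (use set_bounds[OF X0_set(1)[OF P assms(8) C] X0_set(2)[OF P assms(8) C]] in auto)
  have hm: "hdens M \<rho> X0 \<beta> lam \<in> borel_measurable borel"
  proof -
    have "(\<lambda>t. quantile M \<rho> (1 - t)) \<in> borel_measurable borel"
      using measurable_compose[of "\<lambda>t::real. 1 - t" borel borel "quantile M \<rho>" borel] qrm by simp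
    then have "(\<lambda>t. 2 * \<beta> - lam * quantile M \<rho> (1 - t) - 2 * quantile M X0 t) \<in> borel_measurable borel"
      using q0m by measurable
    then show ?thesis by (simp add: hdens_def[abs_def])
  qed
  define K0 where "K0 = 2 * \<beta> + 2 * C"
  define A where "A = 2 * \<bar>\<beta>\<bar> + lam + 2 * \<bar>C\<bar>"
  define B where "B = lam * sqrt E2"
  define A2 where "A2 = 2 * \<bar>\<beta>\<bar> + lam * (sqrt (2 * E2) + 1) + 2 * \<bar>C\<bar>"
  interpret absh "hdens M \<rho> X0 \<beta> lam" K0 A B A2
  proof
    show "hdens M \<rho> X0 \<beta> lam \<in> borel_measurable borel" by (rule hm)
    show "0 \<le> B" using assms(10) E2 by (simp add: B_def)
  next
    fix t :: real assume t: "0 < t" "t < 1"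
    have qr: "0 \<le> quantile M \<rho> (1 - t)" using Qr[of "1 - t"] t by simp
    have q0: "- C \<le> quantile M X0 t" using Q0[of t] t by simp
    have "lam * 0 \<le> lam * quantile M \<rho> (1 - t)" using qr assms(10) by (intro mult_left_mono) auto
    then show "hdens M \<rho> X0 \<beta> lam t \<le> K0" using q0 by (simp add: hdens_def K0_def)
  next
    fix t :: real assume t: "0 < t" "t < 1"
    have qr: "0 \<le> quantile M \<rho> (1 - t)" "quantile M \<rho> (1 - t) \<le> sqrt (E2 / t) + 1"
      using Qr[of "1 - t"] t by auto
    have q0: "\<bar>quantile M X0 t\<bar> \<le> \<bar>C\<bar>" using Q0[of t] t by auto
    have "\<bar>hdens M \<rho> X0 \<beta> lam t\<bar> \<le> 2 * \<bar>\<beta>\<bar> + lam * quantile M \<rho> (1 - t) + 2 * \<bar>quantile M X0 t\<bar>"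
    proof -
      have lq: "0 \<le> lam * quantile M \<rho> (1 - t)" using qr assms(10) by simp
      show ?thesis unfolding hdens_def abs_le_iff
        using lq abs_ge_self[of \<beta>] abs_ge_minus_self[of \<beta>]
          abs_ge_self[of "quantile M X0 t"] abs_ge_minus_self[of "quantile M X0 t"] by linarith
    qed
    also have "\<dots> \<le> 2 * \<bar>\<beta>\<bar> + lam * (sqrt (E2 / t) + 1) + 2 * \<bar>C\<bar>"
      using qr q0 assms(10) by (intro add_mono mult_left_mono) auto
    also have "\<dots> = A + B / sqrt t"
      by (simp add: A_def B_def real_sqrt_divide algebra_simps)
    finally show "\<bar>hdens M \<rho> X0 \<beta> lam t\<bar> \<le> A + B / sqrt t" .
  next
    fix t :: real assume t: "1/2 \<le> t" "t < 1"
    have qr: "0 \<le> quantile M \<rho> (1 - t)" "quantile M \<rho> (1 - t) \<le> sqrt (E2 / t) + 1"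
      using Qr[of "1 - t"] t by auto
    have q0: "\<bar>quantile M X0 t\<bar> \<le> \<bar>C\<bar>" using Q0[of t] t by auto
    have "E2 * 1 \<le> E2 * (2 * t)" using t E2 by (intro mult_left_mono) auto
    then have "E2 / t \<le> 2 * E2" using t by (simp add: divide_le_eq algebra_simps)
    then have s2: "sqrt (E2 / t) \<le> sqrt (2 * E2)" by (rule real_sqrt_le_mono)
    have "\<bar>hdens M \<rho> X0 \<beta> lam t\<bar> \<le> 2 * \<bar>\<beta>\<bar> + lam * quantile M \<rho> (1 - t) + 2 * \<bar>quantile M X0 t\<bar>"
    proof -
      have lq: "0 \<le> lam * quantile M \<rho> (1 - t)" using qr assms(10) by simp
      show ?thesis unfolding hdens_def abs_le_iff
        using lq abs_ge_self[of \<beta>] abs_ge_minus_self[of \<beta>]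
          abs_ge_self[of "quantile M X0 t"] abs_ge_minus_self[of "quantile M X0 t"] by linarith
    qed
    also have "\<dots> \<le> 2 * \<bar>\<beta>\<bar> + lam * (sqrt (2 * E2) + 1) + 2 * \<bar>C\<bar>"
    proof -
      have qq: "quantile M \<rho> (1 - t) \<le> sqrt (2 * E2) + 1" using qr(2) s2 by linarith
      show ?thesis using qq q0 assms(10) by (intro add_mono mult_left_mono) auto
    qed
    finally show "\<bar>hdens M \<rho> X0 \<beta> lam t\<bar> \<le> A2" by (simp add: A2_def)
  qed
  have eqH: "Hfun M \<rho> X0 \<beta> lam = Hf"
    by (rule ext) (simp add: Hfun_def Hf_def)
  have eqG: "Gstar = Gs"
    unfolding Gstar_def eqH by (rule ext) (simp add: Gs_def)
  have eqHh: "Hhat = concave_envelope Hf" unfolding Hhat_def eqH ..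
  show ?thesis unfolding eqG eqHh using abs_main .
qed

end
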